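(* Let $Y_1,\dots,Y_m$ be independent $\mathbb{Z}^d$-valued random vectors with finite third moments, $W:=\sum_iY_i$, $W^{(i)}:=W-Y_i$. Let $(Y_1',\dots,Y_m')$ be an independent copy of $(Y_1,\dots,Y_m)$ and $K$ uniform on $\{1,\dots,m\}$ independent of all these; set $W':=W-Y_K+Y_K'$, $\xi:=W'-W$, $\sigma^2:=\mathbb{E}\{\xi\xi^T\}$, $\chi:=\mathbb{E}|\xi|^3$, $R_2(W):=\mathbb{E}\{\xi\xi^T\mid W\}-\sigma^2$ and $\tilde\varepsilon_1:=\max_{1\le i\le m}\max_{1\le j\le d}d_{TV}(\mathcal{L}(W^{(i)}),\mathcal{L}(W^{(i)}+e^{(j)}))$. Then $\mathbb{E}\{\xi\mid W\}=-m^{-1}(W-\mathbb{E}W)$, and $\mathbb{E}\|R_2(W)\|_1\le4\tilde\varepsilon_1\,\mathbb{E}\|\xi\|_1^3\le 4\tilde\varepsilon_1d^{3/2}\chi$.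
   Context: $\|M\|_1:=\sum_{i,j}|M_{ij}|$ for a matrix, $\|x\|_1:=\sum_i|x_i|$ for a vector, $|\cdot|$ the Euclidean norm, $e^{(j)}$ the $j$-th coordinate vector. *)

theory Defs
  imports "HOL-Probability.Probability"
begin

definition rvec :: "int ^ 'd \<Rightarrow> real ^ 'd" where
  "rvec z = (\<chi> j. real_of_int (z $ j))"

definition unitv :: "'d \<Rightarrow> int ^ 'd" where
  "unitv j = (\<chi> k. if k = j then 1 else 0)"

definition tv_dist :: "'b measure \<Rightarrow> 'b measure \<Rightarrow> real" where
  "tv_dist P Q = (SUP A \<in> sets P. \<bar>measure P A - measure Q A\<bar>)"

end

theory Submission
  imports Defs
begin
instance vec :: (countable, finite) countable
proof (rule countable_classI[of "\<lambda>x. to_nat (vec_nth x)"])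
  fix x y :: "'a ^ 'b"
  assume "to_nat (vec_nth x) = to_nat (vec_nth y)"
  then have "vec_nth x = vec_nth y" by simp
  then show "x = y" by (simp add: vec_nth_inject)
qed

lemma integrable_cong_sp:
  "integrable M f \<Longrightarrow> (\<And>x. x \<in> space M \<Longrightarrow> f x = g x) \<Longrightarrow> integrable M g"
  using Bochner_Integration.integrable_cong[of M M f g] by simp

lemma meas_count_comb:
  fixes f :: "'x \<Rightarrow> 'a::countable" and g :: "'x \<Rightarrow> 'b::countable"
  assumes f: "f \<in> measurable N (count_space UNIV)" and g: "g \<in> measurable N (count_space UNIV)"
  shows "(\<lambda>x. h (f x) (g x)) \<in> measurable N (count_space UNIV)"
proof -
  have "(\<lambda>x. (f x, g x)) \<in> measurable N (count_space UNIV \<Otimes>\<^sub>M count_space UNIV)"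
    using f g by (rule measurable_Pair)
  then have 1: "(\<lambda>x. (f x, g x)) \<in> measurable N (count_space (UNIV \<times> UNIV))"
    by (simp add: pair_measure_countable)
  have 2: "(\<lambda>p. h (fst p) (snd p)) \<in> measurable (count_space (UNIV \<times> UNIV)) (count_space UNIV)"
    by simp
  show ?thesis using measurable_comp[OF 1 2] by (simp add: comp_def)
qed

lemma meas_count_sum:
  fixes f :: "'i \<Rightarrow> 'x \<Rightarrow> 'a::{countable,comm_monoid_add}"
  assumes "finite S" "\<And>i. i \<in> S \<Longrightarrow> f i \<in> measurable N (count_space UNIV)"
  shows "(\<lambda>x. \<Sum>i\<in>S. f i x) \<in> measurable N (count_space UNIV)"
  using assms
proof (induction S rule: finite_induct)
  case empty then show ?case by simp
next
  case (insert a S)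
  have "(\<lambda>x. f a x + (\<Sum>i\<in>S. f i x)) \<in> measurable N (count_space UNIV)"
    by (rule meas_count_comb[where h="(+)"]) (use insert in auto)
  then show ?case using insert by simp
qed

lemma meas_count_real:
  fixes f :: "'x \<Rightarrow> 'a::countable"
  assumes "f \<in> measurable N (count_space UNIV)" "\<And>a. h a \<in> space M'"
  shows "(\<lambda>x. h (f x)) \<in> measurable N M'"
  using measurable_comp[OF assms(1), of h M'] assms(2) by (auto simp add: comp_def)

lemma (in prob_space) indep_fub:
  fixes X :: "'a \<Rightarrow> 'b::countable" and Z :: "'a \<Rightarrow> 'b" and f :: "'b \<Rightarrow> 'b \<Rightarrow> real"
  assumes ind: "indep_var (count_space UNIV) X (count_space UNIV) Z"
    and int: "integrable M (\<lambda>x. f (X x) (Z x))"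
  shows "integrable M (\<lambda>x. \<integral>y. f (X x) (Z y) \<partial>M)"
    and "(\<integral>x. f (X x) (Z x) \<partial>M) = (\<integral>x. (\<integral>y. f (X x) (Z y) \<partial>M) \<partial>M)"
proof -
  have X: "X \<in> measurable M (count_space UNIV)" and Z: "Z \<in> measurable M (count_space UNIV)"
    using ind by (auto dest: indep_var_rv1 indep_var_rv2)
  define D1 where "D1 = distr M (count_space UNIV) X"
  define D2 where "D2 = distr M (count_space UNIV) Z"
  interpret D1: prob_space D1 unfolding D1_def using X by (rule prob_space_distr)
  interpret D2: prob_space D2 unfolding D2_def using Z by (rule prob_space_distr)
  interpret D12: pair_sigma_finite D1 D2 ..
  have eq: "D1 \<Otimes>\<^sub>M D2 = distr M (count_space UNIV \<Otimes>\<^sub>M count_space UNIV) (\<lambda>x. (X x, Z x))"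
    using ind unfolding D1_def D2_def indep_var_distribution_eq by simp
  have cs: "count_space (UNIV::'b set) \<Otimes>\<^sub>M count_space (UNIV::'b set) = count_space UNIV"
    by (simp add: pair_measure_countable)
  have XZ: "(\<lambda>x. (X x, Z x)) \<in> measurable M (count_space UNIV)"
    using measurable_Pair[OF X Z] cs by simp
  have eq': "D1 \<Otimes>\<^sub>M D2 = distr M (count_space UNIV) (\<lambda>x. (X x, Z x))"
    using eq cs by simp
  have intP: "integrable (D1 \<Otimes>\<^sub>M D2) (\<lambda>p. f (fst p) (snd p))"
    unfolding eq' by (subst integrable_distr_eq[OF XZ]) (auto simp: int)
  have m1: "\<And>g::'b \<Rightarrow> real. g \<in> borel_measurable D1" unfolding D1_def by simp
  have m2: "\<And>g::'b \<Rightarrow> real. g \<in> borel_measurable D2" unfolding D2_def by simp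
  have inner: "\<And>a. (\<integral>b. f a b \<partial>D2) = (\<integral>y. f a (Z y) \<partial>M)"
    unfolding D2_def by (rule integral_distr[OF Z]) simp
  have "integrable D1 (\<lambda>a. \<integral>b. f a b \<partial>D2)"
    using D12.integrable_fst'[OF intP] by simp
  then show "integrable M (\<lambda>x. \<integral>y. f (X x) (Z y) \<partial>M)"
    unfolding inner D1_def by (subst (asm) integrable_distr_eq[OF X]) auto
  have "(\<integral>x. f (X x) (Z x) \<partial>M) = integral\<^sup>L (D1 \<Otimes>\<^sub>M D2) (\<lambda>p. f (fst p) (snd p))"
    unfolding eq' by (subst integral_distr[OF XZ]) auto
  also have "\<dots> = (\<integral>a. (\<integral>b. f a b \<partial>D2) \<partial>D1)"
    using D12.integral_fst'[OF intP] by simp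
  also have "\<dots> = (\<integral>x. (\<integral>y. f (X x) (Z y) \<partial>M) \<partial>M)"
    unfolding inner D1_def by (subst integral_distr[OF X]) auto
  finally show "(\<integral>x. f (X x) (Z x) \<partial>M) = (\<integral>x. (\<integral>y. f (X x) (Z y) \<partial>M) \<partial>M)" .
qed

lemma (in prob_space) indep_fub_nn:
  fixes X :: "'a \<Rightarrow> 'b::countable" and Z :: "'a \<Rightarrow> 'b" and f :: "'b \<Rightarrow> 'b \<Rightarrow> ennreal"
  assumes ind: "indep_var (count_space UNIV) X (count_space UNIV) Z"
  shows "(\<integral>\<^sup>+x. f (X x) (Z x) \<partial>M) = (\<integral>\<^sup>+x. (\<integral>\<^sup>+y. f (X x) (Z y) \<partial>M) \<partial>M)"
proof -
  have X: "X \<in> measurable M (count_space UNIV)" and Z: "Z \<in> measurable M (count_space UNIV)"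
    using ind by (auto dest: indep_var_rv1 indep_var_rv2)
  define D1 where "D1 = distr M (count_space UNIV) X"
  define D2 where "D2 = distr M (count_space UNIV) Z"
  interpret D1: prob_space D1 unfolding D1_def using X by (rule prob_space_distr)
  interpret D2: prob_space D2 unfolding D2_def using Z by (rule prob_space_distr)
  interpret D12: pair_sigma_finite D1 D2 ..
  have eq: "D1 \<Otimes>\<^sub>M D2 = distr M (count_space UNIV \<Otimes>\<^sub>M count_space UNIV) (\<lambda>x. (X x, Z x))"
    using ind unfolding D1_def D2_def indep_var_distribution_eq by simp
  have cs: "count_space (UNIV::'b set) \<Otimes>\<^sub>M count_space (UNIV::'b set) = count_space UNIV"
    by (simp add: pair_measure_countable)
  have XZ: "(\<lambda>x. (X x, Z x)) \<in> measurable M (count_space UNIV)"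
    using measurable_Pair[OF X Z] cs by simp
  have eq': "D1 \<Otimes>\<^sub>M D2 = distr M (count_space UNIV) (\<lambda>x. (X x, Z x))"
    using eq cs by simp
  have inner: "\<And>a. (\<integral>\<^sup>+b. f a b \<partial>D2) = (\<integral>\<^sup>+y. f a (Z y) \<partial>M)"
    unfolding D2_def by (rule nn_integral_distr[OF Z]) simp
  have "(\<integral>\<^sup>+x. f (X x) (Z x) \<partial>M) = integral\<^sup>N (D1 \<Otimes>\<^sub>M D2) (\<lambda>p. f (fst p) (snd p))"
    unfolding eq' by (subst nn_integral_distr[OF XZ]) auto
  also have "\<dots> = (\<integral>\<^sup>+a. (\<integral>\<^sup>+b. f a b \<partial>D2) \<partial>D1)"
    by (subst D2.nn_integral_fst[symmetric]) (auto simp: eq')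
  also have "\<dots> = (\<integral>\<^sup>+x. (\<integral>\<^sup>+y. f (X x) (Z y) \<partial>M) \<partial>M)"
    unfolding inner D1_def by (subst nn_integral_distr[OF X]) auto
  finally show ?thesis .
qed

definition fromL :: "'x + nat \<Rightarrow> 'x::zero" where "fromL s = (case s of Inl a \<Rightarrow> a | Inr _ \<Rightarrow> 0)"
definition fromR :: "'x + nat \<Rightarrow> nat" where "fromR s = (case s of Inr n \<Rightarrow> n | Inl _ \<Rightarrow> 0)"

lemma fromL_Inl[simp]: "fromL (Inl a) = a" by (simp add: fromL_def)
lemma fromR_Inr[simp]: "fromR (Inr a) = a" by (simp add: fromR_def)

locale setting = prob_space M for M :: "'a measure" +
  fixes m :: nat and Y Y' :: "nat \<Rightarrow> 'a \<Rightarrow> int ^ 'd" and K :: "'a \<Rightarrow> nat"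
  assumes m_pos: "m \<ge> 1"
    and Y_meas: "\<And>i. i \<in> {1..m} \<Longrightarrow> Y i \<in> measurable M (count_space UNIV)"
    and Y'_meas: "\<And>i. i \<in> {1..m} \<Longrightarrow> Y' i \<in> measurable M (count_space UNIV)"
    and K_meas: "K \<in> measurable M (count_space UNIV)"
    and third_moments: "\<And>i. i \<in> {1..m} \<Longrightarrow> integrable M (\<lambda>x. norm (rvec (Y i x)) ^ 3)"
    and indep: "indep_vars (\<lambda>_. count_space UNIV)
          (\<lambda>t x. case t of Some (Inl i) \<Rightarrow> Inl (Y i x)
                         | Some (Inr i) \<Rightarrow> Inl (Y' i x)
                         | None \<Rightarrow> Inr (K x))
          (Some ` Inl ` {1..m} \<union> Some ` Inr ` {1..m} \<union> {None})"
    and copy: "\<And>i. i \<in> {1..m} \<Longrightarrow>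
          distr M (count_space UNIV) (Y' i) = distr M (count_space UNIV) (Y i)"
    and K_range: "\<And>x. x \<in> space M \<Longrightarrow> K x \<in> {1..m}"
    and K_unif: "\<And>k. k \<in> {1..m} \<Longrightarrow> measure M {x \<in> space M. K x = k} = 1 / real m"
begin

definition "XX = (\<lambda>t x. case t of Some (Inl i) \<Rightarrow> Inl (Y i x)
                         | Some (Inr i) \<Rightarrow> Inl (Y' i x)
                         | None \<Rightarrow> Inr (K x))"
definition "JJ = (Some ` Inl ` {1..m} \<union> Some ` Inr ` {1..m} \<union> {None})"
definition "WW x = (\<Sum>i\<in>{1..m}. Y i x)"
definition "VV i x = WW x - Y i x"

lemma XX_simps[simp]: "XX (Some (Inl i)) x = Inl (Y i x)" "XX (Some (Inr i)) x = Inl (Y' i x)"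
  "XX None x = Inr (K x)"
  by (simp_all add: XX_def)

lemma indepX: "indep_vars (\<lambda>_. count_space UNIV) XX JJ"
  using indep unfolding XX_def JJ_def .

lemma grp:
  assumes "A \<inter> B = {}" "A \<subseteq> JJ" "B \<subseteq> JJ"
    and "g1 \<in> measurable (PiM A (\<lambda>_. count_space UNIV)) N1"
    and "g2 \<in> measurable (PiM B (\<lambda>_. count_space UNIV)) N2"
  shows "indep_var N1 (\<lambda>x. g1 (\<lambda>t\<in>A. XX t x)) N2 (\<lambda>x. g2 (\<lambda>t\<in>B. XX t x))"
  using indep_var_compose[OF indep_var_restrict[OF indepX assms(1-3)] assms(4,5)]
  by (simp add: comp_def)

lemma comp_meas:
  fixes h :: "'b::countable \<Rightarrow> 'c"
  assumes "t \<in> A"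
  shows "(\<lambda>r. h (r t)) \<in> measurable (PiM A (\<lambda>_. count_space UNIV)) (count_space UNIV)"
  by (rule meas_count_real[OF measurable_component_singleton[OF assms]]) simp

lemma comp_meas_borel:
  fixes h :: "'b::countable \<Rightarrow> real"
  assumes "t \<in> A"
  shows "(\<lambda>r. h (r t)) \<in> borel_measurable (PiM A (\<lambda>_. count_space UNIV))"
  by (rule meas_count_real[OF measurable_component_singleton[OF assms]]) simp

lemma Wsum_meas:
  assumes "Some ` Inl ` {1..m} \<subseteq> A"
  shows "(\<lambda>r. \<Sum>l\<in>{1..m}. (fromL (r (Some (Inl l))) :: int^'d)) \<in> measurable (PiM A (\<lambda>_. count_space UNIV)) (count_space UNIV)"
  by (rule meas_count_sum) (use assms in \<open>auto intro!: comp_meas\<close>)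

lemma W_meas: "WW \<in> measurable M (count_space UNIV)"
  unfolding WW_def by (rule meas_count_sum) (auto intro: Y_meas)

lemma V_meas: "i \<in> {1..m} \<Longrightarrow> VV i \<in> measurable M (count_space UNIV)"
  unfolding VV_def by (rule meas_count_comb[OF W_meas Y_meas, where h="(-)"])

lemma G1: assumes i: "i \<in> {1..m}"
  shows "indep_var (count_space UNIV) (\<lambda>x. (Y i x, Y' i x)) (count_space UNIV) (\<lambda>x. (VV i x, 0))"
proof -
  let ?A = "{Some (Inl i), Some (Inr i)}" and ?B = "Some ` Inl ` ({1..m} - {i})"
  have "indep_var (count_space UNIV) (\<lambda>x. (\<lambda>r. (fromL (r (Some (Inl i))) :: int^'d, fromL (r (Some (Inr i))) :: int^'d)) (\<lambda>t\<in>?A. XX t x))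
     (count_space UNIV) (\<lambda>x. (\<lambda>r. (\<Sum>l\<in>{1..m}-{i}. (fromL (r (Some (Inl l))) :: int^'d), 0 :: int^'d)) (\<lambda>t\<in>?B. XX t x))"
  proof (rule grp)
    show "?A \<inter> ?B = {}" "?A \<subseteq> JJ" "?B \<subseteq> JJ" using i by (auto simp: JJ_def)
    show "(\<lambda>r. (fromL (r (Some (Inl i))) :: int^'d, fromL (r (Some (Inr i))) :: int^'d)) \<in> measurable (PiM ?A (\<lambda>_. count_space UNIV)) (count_space UNIV)"
      by (rule meas_count_comb[where h=Pair]) (auto intro!: comp_meas)
    show "(\<lambda>r. (\<Sum>l\<in>{1..m}-{i}. (fromL (r (Some (Inl l))) :: int^'d), 0 :: int^'d)) \<in> measurable (PiM ?B (\<lambda>_. count_space UNIV)) (count_space UNIV)"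
      by (rule meas_count_comb[where h=Pair]) (auto intro!: comp_meas meas_count_sum)
  qed
  moreover have "\<And>x. (\<Sum>l\<in>{1..m}-{i}. Y l x) = VV i x"
    using i by (simp add: VV_def WW_def sum_diff1)
  ultimately show ?thesis by simp
qed

lemma G2: assumes i: "i \<in> {1..m}"
  shows "indep_var (count_space UNIV) (Y i) (count_space UNIV) (Y' i)"
    and "indep_var (count_space UNIV) (Y' i) (count_space UNIV) (Y i)"
proof -
  let ?A = "{Some (Inl i)}" and ?B = "{Some (Inr i)}"
  have m1: "(\<lambda>r. fromL (r (Some (Inl i))) :: int^'d) \<in> measurable (PiM ?A (\<lambda>_. count_space UNIV)) (count_space UNIV)"
    by (auto intro!: comp_meas)
  have m2: "(\<lambda>r. fromL (r (Some (Inr i))) :: int^'d) \<in> measurable (PiM ?B (\<lambda>_. count_space UNIV)) (count_space UNIV)"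
    by (auto intro!: comp_meas)
  have AB: "?A \<inter> ?B = {}" "?A \<subseteq> JJ" "?B \<subseteq> JJ" using i by (auto simp: JJ_def)
  show "indep_var (count_space UNIV) (Y i) (count_space UNIV) (Y' i)"
    using grp[OF AB m1 m2] by (simp add: fun_eq_iff)
  have AB': "?B \<inter> ?A = {}" "?B \<subseteq> JJ" "?A \<subseteq> JJ" using i by (auto simp: JJ_def)
  show "indep_var (count_space UNIV) (Y' i) (count_space UNIV) (Y i)"
    using grp[OF AB' m2 m1] by (simp add: fun_eq_iff)
qed

lemma G3: assumes i: "i \<in> {1..m}"
  shows "indep_var (count_space UNIV) (Y i) (count_space UNIV) (VV i)"
proof -
  let ?A = "{Some (Inl i)}" and ?B = "Some ` Inl ` ({1..m} - {i})"
  have m1: "(\<lambda>r. fromL (r (Some (Inl i))) :: int^'d) \<in> measurable (PiM ?A (\<lambda>_. count_space UNIV)) (count_space UNIV)"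
    by (auto intro!: comp_meas)
  have m2: "(\<lambda>r. (\<Sum>l\<in>{1..m}-{i}. (fromL (r (Some (Inl l))) :: int^'d))) \<in> measurable (PiM ?B (\<lambda>_. count_space UNIV)) (count_space UNIV)"
    by (auto intro!: comp_meas meas_count_sum)
  have AB: "?A \<inter> ?B = {}" "?A \<subseteq> JJ" "?B \<subseteq> JJ" using i by (auto simp: JJ_def)
  have "\<And>x. (\<Sum>l\<in>{1..m}-{i}. Y l x) = VV i x"
    using i by (simp add: VV_def WW_def sum_diff1)
  then show ?thesis
    using grp[OF AB m1 m2] by (simp add: fun_eq_iff)
qed

lemma G4: assumes i: "i \<in> {1..m}"
  fixes \<psi> :: "int^'d \<Rightarrow> int^'d \<Rightarrow> int^'d \<Rightarrow> real"
  shows "indep_var borel (\<lambda>x. if K x = i then 1 else 0 :: real) borel (\<lambda>x. \<psi> (WW x) (Y i x) (Y' i x))"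
proof -
  let ?A = "{None}" and ?B = "Some ` Inl ` {1..m} \<union> Some ` Inr ` {1..m}"
  have m1: "(\<lambda>r. if fromR (r None) = i then 1 else 0 :: real) \<in> borel_measurable (PiM ?A (\<lambda>_. count_space UNIV))"
    using meas_count_real[OF measurable_component_singleton[of None "{None}" "\<lambda>_. count_space UNIV"], of "\<lambda>s::int^'d+nat. if fromR s = i then 1 else (0::real)" borel] by simp
  have mW: "(\<lambda>r. \<Sum>l\<in>{1..m}. (fromL (r (Some (Inl l))) :: int^'d)) \<in> measurable (PiM ?B (\<lambda>_. count_space UNIV)) (count_space UNIV)"
    by (rule Wsum_meas) auto
  have mY: "(\<lambda>r. fromL (r (Some (Inl i))) :: int^'d) \<in> measurable (PiM ?B (\<lambda>_. count_space UNIV)) (count_space UNIV)"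
    using i by (auto intro!: comp_meas)
  have mY': "(\<lambda>r. fromL (r (Some (Inr i))) :: int^'d) \<in> measurable (PiM ?B (\<lambda>_. count_space UNIV)) (count_space UNIV)"
    using i by (auto intro!: comp_meas)
  have m3: "(\<lambda>r. ((\<Sum>l\<in>{1..m}. (fromL (r (Some (Inl l))) :: int^'d)), fromL (r (Some (Inl i))) :: int^'d, fromL (r (Some (Inr i))) :: int^'d)) \<in> measurable (PiM ?B (\<lambda>_. count_space UNIV)) (count_space UNIV)"
    by (rule meas_count_comb[OF mW meas_count_comb[OF mY mY'], where h=Pair])
  have m2: "(\<lambda>r. \<psi> (\<Sum>l\<in>{1..m}. (fromL (r (Some (Inl l))) :: int^'d)) (fromL (r (Some (Inl i)))) (fromL (r (Some (Inr i))))) \<in> borel_measurable (PiM ?B (\<lambda>_. count_space UNIV))"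
    using meas_count_real[OF m3, of "\<lambda>(a,b,c). \<psi> a b c" borel] by simp
  have AB: "?A \<inter> ?B = {}" "?A \<subseteq> JJ" "?B \<subseteq> JJ" using i by (auto simp: JJ_def)
  show ?thesis
    using grp[OF AB m1 m2] i by (simp add: fun_eq_iff WW_def)
qed

lemma G5: assumes i: "i \<in> {1..m}"
  fixes h1 h2 :: "int^'d \<Rightarrow> real"
  shows "indep_var borel (\<lambda>x. h1 (WW x)) borel (\<lambda>x. h2 (Y' i x))"
proof -
  let ?A = "Some ` Inl ` {1..m}" and ?B = "{Some (Inr i)}"
  have mW: "(\<lambda>r. \<Sum>l\<in>{1..m}. (fromL (r (Some (Inl l))) :: int^'d)) \<in> measurable (PiM ?A (\<lambda>_. count_space UNIV)) (count_space UNIV)"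
    by (rule Wsum_meas) auto
  have m1: "(\<lambda>r. h1 (\<Sum>l\<in>{1..m}. (fromL (r (Some (Inl l))) :: int^'d))) \<in> borel_measurable (PiM ?A (\<lambda>_. count_space UNIV))"
    by (rule meas_count_real[OF mW]) simp
  have m2: "(\<lambda>r. h2 (fromL (r (Some (Inr i))))) \<in> borel_measurable (PiM ?B (\<lambda>_. count_space UNIV))"
    by (rule comp_meas_borel) auto
  have AB: "?A \<inter> ?B = {}" "?A \<subseteq> JJ" "?B \<subseteq> JJ" using i by (auto simp: JJ_def)
  show ?thesis
    using grp[OF AB m1 m2] i by (simp add: fun_eq_iff WW_def)
qed

lemma copy_int: assumes "i \<in> {1..m}"
  shows "(\<integral>x. f (Y' i x) \<partial>M) = (\<integral>x. (f (Y i x) :: real) \<partial>M)"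
proof -
  have "(\<integral>x. f (Y' i x) \<partial>M) = integral\<^sup>L (distr M (count_space UNIV) (Y' i)) f"
    by (rule integral_distr[symmetric, OF Y'_meas[OF assms]]) simp
  also have "\<dots> = integral\<^sup>L (distr M (count_space UNIV) (Y i)) f" using copy[OF assms] by simp
  also have "\<dots> = (\<integral>x. f (Y i x) \<partial>M)"
    by (rule integral_distr[OF Y_meas[OF assms]]) simp
  finally show ?thesis .
qed

lemma copy_nn: assumes "i \<in> {1..m}"
  shows "(\<integral>\<^sup>+x. f (Y' i x) \<partial>M) = (\<integral>\<^sup>+x. f (Y i x) \<partial>M)"
proof -
  have "(\<integral>\<^sup>+x. f (Y' i x) \<partial>M) = integral\<^sup>N (distr M (count_space UNIV) (Y' i)) f"
    by (rule nn_integral_distr[symmetric, OF Y'_meas[OF assms]]) simp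
  also have "\<dots> = integral\<^sup>N (distr M (count_space UNIV) (Y i)) f" using copy[OF assms] by simp
  also have "\<dots> = (\<integral>\<^sup>+x. f (Y i x) \<partial>M)"
    by (rule nn_integral_distr[OF Y_meas[OF assms]]) simp
  finally show ?thesis .
qed

lemma copy_intgr: assumes "i \<in> {1..m}"
  shows "integrable M (\<lambda>x. f (Y' i x)) \<longleftrightarrow> integrable M (\<lambda>x. (f (Y i x) :: real))"
proof -
  have "integrable M (\<lambda>x. f (Y' i x)) \<longleftrightarrow> integrable (distr M (count_space UNIV) (Y' i)) f"
    by (rule integrable_distr_eq[symmetric, OF Y'_meas[OF assms]]) simp
  also have "\<dots> \<longleftrightarrow> integrable (distr M (count_space UNIV) (Y i)) f" using copy[OF assms] by simp
  also have "\<dots> \<longleftrightarrow> integrable M (\<lambda>x. f (Y i x))"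
    by (rule integrable_distr_eq[OF Y_meas[OF assms]]) simp
  finally show ?thesis .
qed

lemma K_set: "{x \<in> space M. K x = i} \<in> sets M"
proof -
  have "{x \<in> space M. K x = i} = K -` {i} \<inter> space M" by auto
  then show ?thesis using measurable_sets[OF K_meas, of "{i}"] by simp
qed

lemma K_step:
  fixes \<psi> :: "nat \<Rightarrow> int^'d \<Rightarrow> int^'d \<Rightarrow> int^'d \<Rightarrow> real"
  assumes int: "\<And>i. i \<in> {1..m} \<Longrightarrow> integrable M (\<lambda>x. \<psi> i (WW x) (Y i x) (Y' i x))"
  shows "integrable M (\<lambda>x. \<psi> (K x) (WW x) (Y (K x) x) (Y' (K x) x))"
    and "(\<integral>x. \<psi> (K x) (WW x) (Y (K x) x) (Y' (K x) x) \<partial>M) = (\<Sum>i\<in>{1..m}. \<integral>x. \<psi> i (WW x) (Y i x) (Y' i x) \<partial>M) / real m"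
proof -
  define T where "T i x = (if K x = i then 1 else 0 :: real) * \<psi> i (WW x) (Y i x) (Y' i x)" for i x
  have eq: "\<And>x. x \<in> space M \<Longrightarrow> \<psi> (K x) (WW x) (Y (K x) x) (Y' (K x) x) = (\<Sum>i\<in>{1..m}. T i x)"
  proof -
    fix x assume x: "x \<in> space M"
    have "(\<Sum>i\<in>{1..m}. T i x) = (\<Sum>i\<in>{1..m}. if K x = i then \<psi> i (WW x) (Y i x) (Y' i x) else 0)"
      unfolding T_def by (intro sum.cong) auto
    also have "\<dots> = \<psi> (K x) (WW x) (Y (K x) x) (Y' (K x) x)"
      using K_range[OF x] by (simp add: sum.delta)
    finally show "\<psi> (K x) (WW x) (Y (K x) x) (Y' (K x) x) = (\<Sum>i\<in>{1..m}. T i x)" by simp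
  qed
  have indK: "\<And>i. (\<integral>x. (if K x = i then 1 else 0 :: real) \<partial>M) = measure M {x \<in> space M. K x = i}"
  proof -
    fix i
    have "(\<integral>x. (if K x = i then 1 else 0 :: real) \<partial>M) = (\<integral>x. indicator {x \<in> space M. K x = i} x \<partial>M)"
      by (intro Bochner_Integration.integral_cong) (auto simp: indicator_def)
    then show "(\<integral>x. (if K x = i then 1 else 0 :: real) \<partial>M) = measure M {x \<in> space M. K x = i}"
      using K_set by simp
  qed
  have intK: "\<And>i. integrable M (\<lambda>x. (if K x = i then 1 else 0 :: real))"
  proof -
    fix i
    have "integrable M (\<lambda>x. indicator {x \<in> space M. K x = i} x :: real)"
      using K_set by (intro integrable_real_indicator) (auto simp: emeasure_eq_measure)
    then show "integrable M (\<lambda>x. (if K x = i then 1 else 0 :: real))"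
      by (rule integrable_cong_sp) (auto simp: indicator_def)
  qed
  have Ti: "\<And>i. i \<in> {1..m} \<Longrightarrow> integrable M (T i) \<and> integral\<^sup>L M (T i) = (\<integral>x. \<psi> i (WW x) (Y i x) (Y' i x) \<partial>M) / real m"
  proof -
    fix i assume i: "i \<in> {1..m}"
    have "integrable M (T i)" unfolding T_def
      by (rule indep_var_integrable[OF G4[OF i] intK int[OF i]])
    moreover have "integral\<^sup>L M (T i) = (\<integral>x. \<psi> i (WW x) (Y i x) (Y' i x) \<partial>M) / real m"
      unfolding T_def indep_var_lebesgue_integral[OF G4[OF i] intK int[OF i]] indK K_unif[OF i] by simp
    ultimately show "integrable M (T i) \<and> integral\<^sup>L M (T i) = (\<integral>x. \<psi> i (WW x) (Y i x) (Y' i x) \<partial>M) / real m" ..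
  qed
  have intS: "integrable M (\<lambda>x. \<Sum>i\<in>{1..m}. T i x)"
    by (rule Bochner_Integration.integrable_sum) (use Ti in auto)
  show "integrable M (\<lambda>x. \<psi> (K x) (WW x) (Y (K x) x) (Y' (K x) x))"
    by (rule integrable_cong_sp[OF intS]) (simp add: eq)
  have "(\<integral>x. \<psi> (K x) (WW x) (Y (K x) x) (Y' (K x) x) \<partial>M) = (\<integral>x. (\<Sum>i\<in>{1..m}. T i x) \<partial>M)"
    by (intro Bochner_Integration.integral_cong) (auto simp: eq)
  also have "\<dots> = (\<Sum>i\<in>{1..m}. integral\<^sup>L M (T i))"
    by (rule Bochner_Integration.integral_sum) (use Ti in auto)
  also have "\<dots> = (\<Sum>i\<in>{1..m}. (\<integral>x. \<psi> i (WW x) (Y i x) (Y' i x) \<partial>M) / real m)"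
    using Ti by (intro sum.cong) auto
  finally show "(\<integral>x. \<psi> (K x) (WW x) (Y (K x) x) (Y' (K x) x) \<partial>M) = (\<Sum>i\<in>{1..m}. \<integral>x. \<psi> i (WW x) (Y i x) (Y' i x) \<partial>M) / real m"
    by (simp add: sum_divide_distrib)
qed

end

definition l1 :: "int^'d \<Rightarrow> real" where "l1 u = (\<Sum>j\<in>UNIV. \<bar>real_of_int (u $ j)\<bar>)"
definition gg :: "'d \<Rightarrow> 'd \<Rightarrow> int^'d \<Rightarrow> real" where "gg j k u = real_of_int (u $ j) * real_of_int (u $ k)"

lemma l1_nonneg[simp]: "0 \<le> l1 u" by (simp add: l1_def sum_nonneg)

lemma l1_add: "l1 (a + b) \<le> l1 a + l1 b"
  unfolding l1_def by (simp add: sum.distrib[symmetric] sum_mono abs_triangle_ineq)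

lemma l1_diff: "l1 (a - b) \<le> l1 a + l1 b"
  unfolding l1_def by (simp add: sum.distrib[symmetric] sum_mono abs_triangle_ineq4)

lemma l1_minus: "l1 (a - b) = l1 (b - a)"
  unfolding l1_def by (simp add: abs_minus_commute)

lemma l1_coord: "\<bar>real_of_int (u $ j)\<bar> \<le> l1 u"
  unfolding l1_def by (rule member_le_sum) auto

lemma gg_bound: "\<bar>gg j k u\<bar> \<le> l1 u ^ 2"
  unfolding gg_def power2_eq_square abs_mult by (intro mult_mono l1_coord) auto

lemma pow_le_1_3: "0 \<le> t \<Longrightarrow> (t::real) ^ 2 \<le> 1 + t ^ 3"
proof (cases "t \<le> 1")
  case True
  assume "0 \<le> t"
  then have "t ^ 2 \<le> 1" using True by (simp add: power_le_one)
  then show ?thesis using \<open>0 \<le> t\<close> by (smt (verit) zero_le_power)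
next
  case False
  then have "t ^ 2 * 1 \<le> t ^ 2 * t" by (intro mult_left_mono) auto
  then show ?thesis by (simp add: power3_eq_cube power2_eq_square)
qed

lemma pow_le_1_3': "0 \<le> t \<Longrightarrow> (t::real) \<le> 1 + t ^ 3"
proof (cases "t \<le> 1")
  case True
  assume "0 \<le> t"
  then show ?thesis using True by (smt (verit) zero_le_power)
next
  case False
  have "1 \<le> t * t" using False by (metis less_1_mult less_eq_real_def not_le)
  then have "t * 1 \<le> t * (t * t)" using False by (intro mult_left_mono) auto
  then show ?thesis by (simp add: power3_eq_cube)
qed

lemma cube_sum: "0 \<le> a \<Longrightarrow> 0 \<le> b \<Longrightarrow> ((a::real) + b) ^ 3 \<le> 4 * (a ^ 3 + b ^ 3)"
proof -
  assume a: "0 \<le> a" and b: "0 \<le> b"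
  have "0 \<le> 3 * (a + b) * (a - b)^2" using a b by simp
  then show ?thesis by (simp add: power2_eq_square power3_eq_cube algebra_simps)
qed

lemma l1_diff_cube: "l1 (a - b) ^ 3 \<le> 4 * (l1 a ^ 3 + l1 b ^ 3)"
  by (rule order_trans[OF power_mono[OF l1_diff] cube_sum]) auto

lemma l1_le_norm: "(\<Sum>j\<in>UNIV. \<bar>v $ j\<bar>) \<le> sqrt (real CARD('d)) * norm (v :: real^'d)"
proof -
  have "(\<Sum>j\<in>UNIV. \<bar>v $ j\<bar> * \<bar>1\<bar>) \<le> L2_set (\<lambda>j. v $ j) UNIV * L2_set (\<lambda>j::'d. 1::real) UNIV"
    using L2_set_mult_ineq[where f="\<lambda>j. v $ j" and g="\<lambda>j. 1" and A=UNIV] by simp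
  moreover have "L2_set (\<lambda>j. v $ j) UNIV = norm v"
    by (simp add: norm_vec_def L2_set_def)
  moreover have "L2_set (\<lambda>j. 1::real) (UNIV::'d set) = sqrt (real CARD('d))"
    by (simp add: L2_set_constant)
  ultimately show ?thesis by (simp add: mult.commute)
qed

lemma l1_cube_norm: "(\<Sum>j\<in>UNIV. \<bar>v $ j\<bar>) ^ 3 \<le> real CARD('d) powr (3/2) * norm (v :: real^'d) ^ 3"
proof -
  have c: "0 < real CARD('d)" by simp
  have "(\<Sum>j\<in>UNIV. \<bar>v $ j\<bar>) ^ 3 \<le> (sqrt (real CARD('d)) * norm v) ^ 3"
    by (rule power_mono[OF l1_le_norm]) (simp add: sum_nonneg)
  also have "\<dots> = sqrt (real CARD('d)) ^ 3 * norm v ^ 3" by (simp add: power_mult_distrib)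
  also have "sqrt (real CARD('d)) ^ 3 = real CARD('d) powr (3/2)"
    using c by (simp add: powr_half_sqrt[symmetric] powr_power)
  finally show ?thesis .
qed

lemma l1_rvec: "l1 u = (\<Sum>j\<in>UNIV. \<bar>rvec u $ j\<bar>)"
  by (simp add: l1_def rvec_def)

lemma l1_cube_norm': "l1 u ^ 3 \<le> real CARD('d) powr (3/2) * norm (rvec (u::int^'d)) ^ 3"
  unfolding l1_rvec by (rule l1_cube_norm)

context setting begin

lemma int_bound3:
  fixes f :: "'a \<Rightarrow> int^'d" and h :: "int^'d \<Rightarrow> real"
  assumes f: "f \<in> measurable M (count_space UNIV)" and i3: "integrable M (\<lambda>x. l1 (f x) ^ 3)"
    and b: "\<And>u. \<bar>h u\<bar> \<le> c * (1 + l1 u ^ 3)"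
  shows "integrable M (\<lambda>x. h (f x))"
proof (rule Bochner_Integration.integrable_bound)
  show "integrable M (\<lambda>x. c * (1 + l1 (f x) ^ 3))" using i3 by simp
  show "(\<lambda>x. h (f x)) \<in> borel_measurable M" by (rule meas_count_real[OF f]) simp
  have "\<And>u. \<bar>h u\<bar> \<le> \<bar>c * (1 + l1 u ^ 3)\<bar>" using b by (rule order_trans) simp
  then show "AE x in M. norm (h (f x)) \<le> norm (c * (1 + l1 (f x) ^ 3))" by simp
qed

lemma int_diff3:
  fixes f g :: "'a \<Rightarrow> int^'d"
  assumes f: "f \<in> measurable M (count_space UNIV)" and g: "g \<in> measurable M (count_space UNIV)"
    and i3: "integrable M (\<lambda>x. l1 (f x) ^ 3)" and j3: "integrable M (\<lambda>x. l1 (g x) ^ 3)"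
  shows "integrable M (\<lambda>x. l1 (f x - g x) ^ 3)"
proof (rule Bochner_Integration.integrable_bound)
  show "integrable M (\<lambda>x. 4 * (l1 (f x) ^ 3 + l1 (g x) ^ 3))" using i3 j3 by simp
  show "(\<lambda>x. l1 (f x - g x) ^ 3) \<in> borel_measurable M"
    by (rule meas_count_real[OF meas_count_comb[OF f g, where h="(-)"]]) simp
  show "AE x in M. norm (l1 (f x - g x) ^ 3) \<le> norm (4 * (l1 (f x) ^ 3 + l1 (g x) ^ 3))"
    by (rule AE_I2) (use l1_diff_cube in simp)
qed

lemma int_const3: "integrable M (\<lambda>x. l1 (c::int^'d) ^ 3)" by simp

lemma mY: assumes "i \<in> {1..m}" shows "integrable M (\<lambda>x. l1 (Y i x) ^ 3)"
proof (rule Bochner_Integration.integrable_bound)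
  show "integrable M (\<lambda>x. real CARD('d) powr (3/2) * norm (rvec (Y i x)) ^ 3)"
    using third_moments[OF assms] by simp
  show "(\<lambda>x. l1 (Y i x) ^ 3) \<in> borel_measurable M"
    by (rule meas_count_real[OF Y_meas[OF assms]]) simp
  show "AE x in M. norm (l1 (Y i x) ^ 3) \<le> norm (real CARD('d) powr (3/2) * norm (rvec (Y i x)) ^ 3)"
    by (rule AE_I2) (use l1_cube_norm' in simp)
qed

lemma mY': assumes "i \<in> {1..m}" shows "integrable M (\<lambda>x. l1 (Y' i x) ^ 3)"
  using mY[OF assms] copy_intgr[OF assms, of "\<lambda>u. l1 u ^ 3"] by simp

end

definition li :: "int^'d \<Rightarrow> int" where "li u = (\<Sum>j\<in>UNIV. \<bar>u $ j\<bar>)"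

lemma l1_li: "l1 u = real_of_int (li u)"
  by (simp add: l1_def li_def)

lemma li_nonneg: "0 \<le> li u" by (simp add: li_def sum_nonneg)

lemma li_zero: "li u = 0 \<Longrightarrow> u = 0"
proof -
  assume "li u = 0"
  then have "\<forall>j\<in>UNIV. \<bar>u $ j\<bar> = 0" unfolding li_def by (subst sum_nonneg_eq_0_iff[symmetric]) auto
  then show "u = 0" by (simp add: vec_eq_iff)
qed

lemma li_step_pos:
  fixes d :: "int^'d"
  assumes "d $ j > 0"
  shows "li (d - unitv j) = li d - 1"
proof -
  have "li (d - unitv j) = \<bar>d $ j - 1\<bar> + (\<Sum>k\<in>UNIV - {j}. \<bar>d $ k\<bar>)"
    unfolding li_def by (subst sum.remove[of _ j]) (auto simp: unitv_def intro!: sum.cong)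
  also have "\<bar>d $ j - 1\<bar> = \<bar>d $ j\<bar> - 1"
    using assms by auto
  also have "li d = \<bar>d $ j\<bar> + (\<Sum>k\<in>UNIV - {j}. \<bar>d $ k\<bar>)"
    unfolding li_def by (subst sum.remove[of _ j]) auto
  ultimately show ?thesis by simp
qed

lemma li_step_neg:
  fixes d :: "int^'d"
  assumes "d $ j < 0"
  shows "li (d + unitv j) = li d - 1"
proof -
  have "li (d + unitv j) = \<bar>d $ j + 1\<bar> + (\<Sum>k\<in>UNIV - {j}. \<bar>d $ k\<bar>)"
    unfolding li_def by (subst sum.remove[of _ j]) (auto simp: unitv_def intro!: sum.cong)
  also have "\<bar>d $ j + 1\<bar> = \<bar>d $ j\<bar> - 1"
    using assms by auto
  also have "li d = \<bar>d $ j\<bar> + (\<Sum>k\<in>UNIV - {j}. \<bar>d $ k\<bar>)"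
    unfolding li_def by (subst sum.remove[of _ j]) auto
  ultimately show ?thesis by simp
qed

lemma sign_ind:
  fixes \<phi> :: "int^'d \<Rightarrow> real"
  assumes phi: "\<And>w. \<phi> w \<in> {-1,0,1}"
  shows "\<And>w. \<phi> (w + y) = indicator {w. \<phi> (w + y) = 1} w - indicator {w. \<phi> (w + y) = -1} w"
proof -
    fix w
    have "\<phi> (w + y) = -1 \<or> \<phi> (w + y) = 0 \<or> \<phi> (w + y) = 1" using phi[of "w + y"] by simp
    then show "\<phi> (w + y) = indicator {w. \<phi> (w + y) = 1} w - indicator {w. \<phi> (w + y) = -1} w"
      by (elim disjE) (simp_all add: indicator_def)
qed

lemma tv_set:
  assumes P: "prob_space P" and Q: "prob_space Q" and S: "S \<in> sets P"
  shows "\<bar>measure P S - measure Q S\<bar> \<le> tv_dist P Q"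
  unfolding tv_dist_def
proof (rule cSUP_upper[OF S])
  have "\<And>A. \<bar>measure P A - measure Q A\<bar> \<le> 1"
    using prob_space.prob_le_1[OF P] prob_space.prob_le_1[OF Q] measure_nonneg
    by (smt (verit) measure_nonneg)
  then show "bdd_above ((\<lambda>A. \<bar>measure P A - measure Q A\<bar>) ` sets P)"
    by (intro bdd_aboveI[of _ 1]) auto
qed

context setting begin

definition "eps = Max ((\<lambda>(i, j). tv_dist (distr M (count_space UNIV) (VV i))
                           (distr M (count_space UNIV) (\<lambda>x. VV i x + unitv j)))
                        ` ({1..m} \<times> UNIV))"

lemma tv_le: "i \<in> {1..m} \<Longrightarrow> tv_dist (distr M (count_space UNIV) (VV i))
                           (distr M (count_space UNIV) (\<lambda>x. VV i x + unitv j)) \<le> eps"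
  unfolding eps_def by (rule Max_ge) auto

lemma int_sign:
  fixes f :: "'a \<Rightarrow> int^'d" and \<phi> :: "int^'d \<Rightarrow> real"
  assumes f: "f \<in> measurable M (count_space UNIV)" and phi: "\<And>w. \<phi> w \<in> {-1,0,1}"
  shows "(\<integral>x. \<phi> (f x + y) \<partial>M) = measure (distr M (count_space UNIV) f) {w. \<phi> (w + y) = 1}
           - measure (distr M (count_space UNIV) f) {w. \<phi> (w + y) = -1}"
proof -
  let ?Q = "distr M (count_space UNIV) f"
  interpret Q: prob_space ?Q by (rule prob_space_distr[OF f])
  have eq: "\<And>w. \<phi> (w + y) = indicator {w. \<phi> (w + y) = 1} w - indicator {w. \<phi> (w + y) = -1} w"
    using sign_ind[OF phi] .
  have "(\<integral>x. \<phi> (f x + y) \<partial>M) = (\<integral>w. \<phi> (w + y) \<partial>?Q)"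
    by (rule integral_distr[symmetric, OF f]) simp
  also have "\<dots> = (\<integral>w. indicator {w. \<phi> (w + y) = 1} w - indicator {w. \<phi> (w + y) = -1} w \<partial>?Q)"
    by (rule Bochner_Integration.integral_cong[OF refl eq])
  also have "\<dots> = measure ?Q {w. \<phi> (w + y) = 1} - measure ?Q {w. \<phi> (w + y) = -1}"
    by (subst Bochner_Integration.integral_diff) (auto simp: Q.emeasure_eq_measure intro!: integrable_real_indicator)
  finally show ?thesis .
qed

definition "AA \<phi> i y = (\<integral>x. \<phi> (VV i x + y) \<partial>M)"

lemma AA_step:
  assumes i: "i \<in> {1..m}" and phi: "\<And>w. \<phi> w \<in> {-1,0,1}"
  shows "\<bar>AA \<phi> i y - AA \<phi> i (y + unitv j)\<bar> \<le> 2 * eps"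
proof -
  let ?P = "distr M (count_space UNIV) (VV i)"
  let ?Q = "distr M (count_space UNIV) (\<lambda>x. VV i x + unitv j)"
  have fV: "VV i \<in> measurable M (count_space UNIV)" by (rule V_meas[OF i])
  have fV': "(\<lambda>x. VV i x + unitv j) \<in> measurable M (count_space UNIV)"
    by (rule meas_count_comb[OF fV measurable_count_space_const, where h="(+)"])
  have P: "prob_space ?P" by (rule prob_space_distr[OF fV])
  have Q: "prob_space ?Q" by (rule prob_space_distr[OF fV'])
  have a1: "AA \<phi> i y = measure ?P {w. \<phi> (w + y) = 1} - measure ?P {w. \<phi> (w + y) = -1}"
    unfolding AA_def by (rule int_sign[OF fV phi])
  have "AA \<phi> i (y + unitv j) = (\<integral>x. \<phi> ((VV i x + unitv j) + y) \<partial>M)"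
    unfolding AA_def by (simp add: add_ac)
  also have "\<dots> = measure ?Q {w. \<phi> (w + y) = 1} - measure ?Q {w. \<phi> (w + y) = -1}"
    by (rule int_sign[OF fV' phi])
  finally have a2: "AA \<phi> i (y + unitv j) = measure ?Q {w. \<phi> (w + y) = 1} - measure ?Q {w. \<phi> (w + y) = -1}" .
  have t1: "\<bar>measure ?P {w. \<phi> (w + y) = 1} - measure ?Q {w. \<phi> (w + y) = 1}\<bar> \<le> eps"
    by (rule order_trans[OF tv_set[OF P Q] tv_le[OF i]]) simp
  have t2: "\<bar>measure ?P {w. \<phi> (w + y) = -1} - measure ?Q {w. \<phi> (w + y) = -1}\<bar> \<le> eps"
    by (rule order_trans[OF tv_set[OF P Q] tv_le[OF i]]) simp
  show ?thesis unfolding a1 a2 using t1 t2 by linarith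
qed

lemma AA_lip:
  assumes i: "i \<in> {1..m}" and phi: "\<And>w. \<phi> w \<in> {-1,0,1}"
  shows "\<bar>AA \<phi> i y - AA \<phi> i z\<bar> \<le> 2 * eps * l1 (z - y)"
proof -
  have "\<forall>y. nat (li (z - y)) = n \<longrightarrow> \<bar>AA \<phi> i y - AA \<phi> i z\<bar> \<le> 2 * eps * real n" for n
  proof (induction n)
    case 0
    show ?case
    proof (intro allI impI)
      fix y assume "nat (li (z - y)) = 0"
      then have "li (z - y) = 0" using li_nonneg[of "z - y"] by simp
      then have "z = y" using li_zero by fastforce
      then show "\<bar>AA \<phi> i y - AA \<phi> i z\<bar> \<le> 2 * eps * real 0" by simp
    qed
  next
    case (Suc n)
    show ?case
    proof (intro allI impI)
      fix y assume n: "nat (li (z - y)) = Suc n"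
      then have "z - y \<noteq> 0" by (auto simp: li_def)
      then obtain j where j: "(z - y) $ j \<noteq> 0" by (auto simp: vec_eq_iff)
      obtain y' where y': "nat (li (z - y')) = n" and st: "\<bar>AA \<phi> i y - AA \<phi> i y'\<bar> \<le> 2 * eps"
      proof (cases "(z - y) $ j > 0")
        case True
        have "z - (y + unitv j) = (z - y) - unitv j" by (simp add: algebra_simps)
        then have "li (z - (y + unitv j)) = li (z - y) - 1" using li_step_pos[OF True] by (simp only:)
        then have "nat (li (z - (y + unitv j))) = n" using n by simp
        moreover have "\<bar>AA \<phi> i y - AA \<phi> i (y + unitv j)\<bar> \<le> 2 * eps" by (rule AA_step[OF i phi])
        ultimately show ?thesis using that by blast
      next
        case False
        then have neg: "(z - y) $ j < 0" using j by simp
        have "z - (y - unitv j) = (z - y) + unitv j" by (simp add: algebra_simps)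
        then have "li (z - (y - unitv j)) = li (z - y) - 1" using li_step_neg[OF neg] by (simp only:)
        then have "nat (li (z - (y - unitv j))) = n" using n by simp
        moreover have "\<bar>AA \<phi> i y - AA \<phi> i (y - unitv j)\<bar> \<le> 2 * eps"
          using AA_step[OF i phi, where y="y - unitv j" and j=j] by (simp add: abs_minus_commute)
        ultimately show ?thesis using that by blast
      qed
      then have ih: "\<bar>AA \<phi> i y' - AA \<phi> i z\<bar> \<le> 2 * eps * real n" using Suc.IH by blast
      show "\<bar>AA \<phi> i y - AA \<phi> i z\<bar> \<le> 2 * eps * real (Suc n)"
        using ih st by (simp add: algebra_simps)
    qed
  qed
  then have "\<bar>AA \<phi> i y - AA \<phi> i z\<bar> \<le> 2 * eps * real (nat (li (z - y)))" by blast
  then show ?thesis using li_nonneg[of "z - y"] by (simp add: l1_li)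
qed

end

context setting begin

lemma bdd_int:
  fixes f a :: "'a \<Rightarrow> real"
  assumes f: "integrable M f" and a: "a \<in> borel_measurable M" and b: "\<And>x. \<bar>a x\<bar> \<le> 1"
  shows "integrable M (\<lambda>x. a x * f x)"
proof (rule Bochner_Integration.integrable_bound[OF f])
  show "(\<lambda>x. a x * f x) \<in> borel_measurable M" using a borel_measurable_integrable[OF f] by measurable
  show "AE x in M. norm (a x * f x) \<le> norm (f x)"
    by (rule AE_I2) (simp add: abs_mult mult_left_le_one_le b)
qed

lemma AA_bound:
  fixes \<phi> :: "int^'d \<Rightarrow> real"
  assumes i: "i \<in> {1..m}" and phi: "\<And>w. \<phi> w \<in> {-1,0,1}"
  shows "\<bar>AA \<phi> i y\<bar> \<le> 1"
proof -
  let ?P = "distr M (count_space UNIV) (VV i)"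
  interpret P: prob_space ?P by (rule prob_space_distr[OF V_meas[OF i]])
  have "AA \<phi> i y = P.prob {w. \<phi> (w + y) = 1} - P.prob {w. \<phi> (w + y) = -1}"
    unfolding AA_def by (rule int_sign[OF V_meas[OF i] phi])
  moreover have "P.prob {w. \<phi> (w + y) = 1} \<le> 1" "P.prob {w. \<phi> (w + y) = -1} \<le> 1"
    by (rule P.prob_le_1)+
  ultimately show ?thesis by (smt (verit) measure_nonneg)
qed

lemma phi_abs: "(r::real) \<in> {-1,0,1} \<Longrightarrow> \<bar>r\<bar> \<le> 1"
  by auto

lemma int_phi:
  fixes \<phi> :: "int^'d \<Rightarrow> real"
  assumes f: "f \<in> measurable M (count_space UNIV)" and phi: "\<And>w. \<phi> w \<in> {-1,0,1}"
  shows "integrable M (\<lambda>x. \<phi> (f x :: int^'d))"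
proof (rule integrable_const_bound[where B=1])
  show "AE x in M. norm (\<phi> (f x)) \<le> 1" by (rule AE_I2) (simp add: phi_abs[OF phi])
  show "(\<lambda>x. \<phi> (f x)) \<in> borel_measurable M" by (rule meas_count_real[OF f]) simp
qed

lemma cov:
  fixes \<phi> G :: "int^'d \<Rightarrow> real"
  assumes i: "i \<in> {1..m}" and phi: "\<And>w. \<phi> w \<in> {-1,0,1}" and Gb: "\<And>u. \<bar>G u\<bar> \<le> c * (1 + l1 u ^ 3)"
  defines "H \<equiv> \<lambda>y. \<integral>x. G (Y' i x - y) \<partial>M"
  shows "(\<integral>x. \<phi> (WW x) * G (Y' i x - Y i x) \<partial>M) - (\<integral>x. \<phi> (WW x) \<partial>M) * (\<integral>x. G (Y' i x - Y i x) \<partial>M)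
         = (\<integral>x. (AA \<phi> i (Y i x) - AA \<phi> i (Y' i x)) * (H (Y i x) - H (Y' i x)) \<partial>M) / 2"
    and "integrable M (\<lambda>x. (AA \<phi> i (Y i x) - AA \<phi> i (Y' i x)) * (H (Y i x) - H (Y' i x)))"
proof -
  note mYi = Y_meas[OF i] and mY'i = Y'_meas[OF i] and mVi = V_meas[OF i]
  have mD: "(\<lambda>x. Y' i x - Y i x) \<in> measurable M (count_space UNIV)"
    by (rule meas_count_comb[OF mY'i mYi, where h="(-)"])
  have int3: "integrable M (\<lambda>x. l1 (Y' i x - Y i x) ^ 3)"
    by (rule int_diff3[OF mY'i mYi mY'[OF i] mY[OF i]])
  have intG: "integrable M (\<lambda>x. G (Y' i x - Y i x))"
    by (rule int_bound3[OF mD int3 Gb])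
  have WW: "\<And>x. VV i x + Y i x = WW x" by (simp add: VV_def)
  have AAm: "\<And>f. f \<in> measurable M (count_space UNIV) \<Longrightarrow> (\<lambda>x. AA \<phi> i (f x)) \<in> borel_measurable M"
    by (rule meas_count_real) auto
  have Hm: "\<And>f. f \<in> measurable M (count_space UNIV) \<Longrightarrow> (\<lambda>x. H (f x)) \<in> borel_measurable M"
    by (rule meas_count_real) auto
  have AAb: "\<And>y. \<bar>AA \<phi> i y\<bar> \<le> 1" by (rule AA_bound[OF i phi])
  have a: "(\<integral>x. \<phi> (WW x) * G (Y' i x - Y i x) \<partial>M) = (\<integral>x. AA \<phi> i (Y i x) * G (Y' i x - Y i x) \<partial>M)"
  proof -
    let ?f = "\<lambda>(p::(int^'d) \<times> (int^'d)) (q::(int^'d) \<times> (int^'d)). \<phi> (fst q + fst p) * G (snd p - fst p)"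
    have mphi: "(\<lambda>x. \<phi> (VV i x + Y i x)) \<in> borel_measurable M"
      by (rule meas_count_real[OF meas_count_comb[OF mVi mYi, where h="(+)"]]) simp
    have int: "integrable M (\<lambda>x. ?f (Y i x, Y' i x) (VV i x, 0))"
      using bdd_int[OF intG mphi phi_abs[OF phi]] by simp
    have "(\<integral>x. \<phi> (WW x) * G (Y' i x - Y i x) \<partial>M) = (\<integral>x. ?f (Y i x, Y' i x) (VV i x, 0) \<partial>M)"
      by (simp add: WW)
    also have "\<dots> = (\<integral>x. (\<integral>y. ?f (Y i x, Y' i x) (VV i y, 0) \<partial>M) \<partial>M)"
      by (rule indep_fub(2)[OF G1[OF i] int])
    also have "\<dots> = (\<integral>x. AA \<phi> i (Y i x) * G (Y' i x - Y i x) \<partial>M)"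
      by (simp add: AA_def add.commute)
    finally show ?thesis .
  qed
  have b: "(\<integral>x. AA \<phi> i (Y i x) * G (Y' i x - Y i x) \<partial>M) = (\<integral>x. AA \<phi> i (Y i x) * H (Y i x) \<partial>M)"
  proof -
    have int: "integrable M (\<lambda>x. AA \<phi> i (Y i x) * G (Y' i x - Y i x))"
      by (rule bdd_int[OF intG AAm[OF mYi] AAb])
    have "(\<integral>x. AA \<phi> i (Y i x) * G (Y' i x - Y i x) \<partial>M) = (\<integral>x. (\<integral>y. AA \<phi> i (Y i x) * G (Y' i y - Y i x) \<partial>M) \<partial>M)"
      by (rule indep_fub(2)[OF G2(1)[OF i], where f="\<lambda>y y'. AA \<phi> i y * G (y' - y)", OF int])
    also have "\<dots> = (\<integral>x. AA \<phi> i (Y i x) * H (Y i x) \<partial>M)"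
      by (simp add: H_def)
    finally show ?thesis .
  qed
  have b': "integrable M (\<lambda>x. H (Y i x))" "(\<integral>x. G (Y' i x - Y i x) \<partial>M) = (\<integral>x. H (Y i x) \<partial>M)"
    using indep_fub[OF G2(1)[OF i], where f="\<lambda>y y'. G (y' - y)", OF intG] by (simp_all add: H_def)
  have c: "(\<integral>x. \<phi> (WW x) \<partial>M) = (\<integral>x. AA \<phi> i (Y i x) \<partial>M)"
  proof -
    have int: "integrable M (\<lambda>x. \<phi> (VV i x + Y i x))"
      by (rule int_phi[OF meas_count_comb[OF mVi mYi, where h="(+)"] phi])
    have "(\<integral>x. \<phi> (WW x) \<partial>M) = (\<integral>x. \<phi> (VV i x + Y i x) \<partial>M)" by (simp add: WW)
    also have "\<dots> = (\<integral>x. (\<integral>y. \<phi> (VV i y + Y i x) \<partial>M) \<partial>M)"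
      by (rule indep_fub(2)[OF G3[OF i], where f="\<lambda>y v. \<phi> (v + y)", OF int])
    also have "\<dots> = (\<integral>x. AA \<phi> i (Y i x) \<partial>M)" by (simp add: AA_def)
    finally show ?thesis .
  qed
  have iH: "integrable M (\<lambda>x. H (Y i x))" by (rule b'(1))
  have iH': "integrable M (\<lambda>x. H (Y' i x))" using iH copy_intgr[OF i, of H] by simp
  have iA: "integrable M (\<lambda>x. AA \<phi> i (Y i x))" and iA': "integrable M (\<lambda>x. AA \<phi> i (Y' i x))"
    by (rule integrable_const_bound[where B=1]; use AAb AAm mYi mY'i in auto)+
  have i1: "integrable M (\<lambda>x. AA \<phi> i (Y i x) * H (Y i x))" by (rule bdd_int[OF iH AAm[OF mYi] AAb])
  have i2: "integrable M (\<lambda>x. AA \<phi> i (Y i x) * H (Y' i x))" by (rule bdd_int[OF iH' AAm[OF mYi] AAb])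
  have i3: "integrable M (\<lambda>x. AA \<phi> i (Y' i x) * H (Y i x))" by (rule bdd_int[OF iH AAm[OF mY'i] AAb])
  have i4: "integrable M (\<lambda>x. AA \<phi> i (Y' i x) * H (Y' i x))" by (rule bdd_int[OF iH' AAm[OF mY'i] AAb])
  have e1: "(\<integral>x. AA \<phi> i (Y i x) * H (Y' i x) \<partial>M) = (\<integral>x. AA \<phi> i (Y i x) \<partial>M) * (\<integral>x. H (Y' i x) \<partial>M)"
  proof -
    have "indep_var borel ((\<lambda>y. AA \<phi> i y) \<circ> Y i) borel (H \<circ> Y' i)"
      by (rule indep_var_compose[OF G2(1)[OF i]]) auto
    then show ?thesis using indep_var_lebesgue_integral[of "\<lambda>x. AA \<phi> i (Y i x)" "\<lambda>x. H (Y' i x)"] iA iH'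
      by (simp add: comp_def)
  qed
  have e2: "(\<integral>x. AA \<phi> i (Y' i x) * H (Y i x) \<partial>M) = (\<integral>x. AA \<phi> i (Y' i x) \<partial>M) * (\<integral>x. H (Y i x) \<partial>M)"
  proof -
    have "indep_var borel ((\<lambda>y. AA \<phi> i y) \<circ> Y' i) borel (H \<circ> Y i)"
      by (rule indep_var_compose[OF G2(2)[OF i]]) auto
    then show ?thesis using indep_var_lebesgue_integral[of "\<lambda>x. AA \<phi> i (Y' i x)" "\<lambda>x. H (Y i x)"] iA' iH
      by (simp add: comp_def)
  qed
  have f1: "(\<integral>x. AA \<phi> i (Y' i x) \<partial>M) = (\<integral>x. AA \<phi> i (Y i x) \<partial>M)" by (rule copy_int[OF i])
  have f2: "(\<integral>x. H (Y' i x) \<partial>M) = (\<integral>x. H (Y i x) \<partial>M)" by (rule copy_int[OF i])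
  have f3: "(\<integral>x. AA \<phi> i (Y' i x) * H (Y' i x) \<partial>M) = (\<integral>x. AA \<phi> i (Y i x) * H (Y i x) \<partial>M)"
    by (rule copy_int[OF i, where f="\<lambda>y. AA \<phi> i y * H y"])
  have expand: "\<And>x. (AA \<phi> i (Y i x) - AA \<phi> i (Y' i x)) * (H (Y i x) - H (Y' i x)) =
     AA \<phi> i (Y i x) * H (Y i x) - AA \<phi> i (Y i x) * H (Y' i x) - AA \<phi> i (Y' i x) * H (Y i x) + AA \<phi> i (Y' i x) * H (Y' i x)"
    by (simp add: algebra_simps)
  show "integrable M (\<lambda>x. (AA \<phi> i (Y i x) - AA \<phi> i (Y' i x)) * (H (Y i x) - H (Y' i x)))"
    unfolding expand using i1 i2 i3 i4 by simp
  have "(\<integral>x. (AA \<phi> i (Y i x) - AA \<phi> i (Y' i x)) * (H (Y i x) - H (Y' i x)) \<partial>M) =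
     (\<integral>x. AA \<phi> i (Y i x) * H (Y i x) \<partial>M) - (\<integral>x. AA \<phi> i (Y i x) * H (Y' i x) \<partial>M)
     - (\<integral>x. AA \<phi> i (Y' i x) * H (Y i x) \<partial>M) + (\<integral>x. AA \<phi> i (Y' i x) * H (Y' i x) \<partial>M)"
    unfolding expand using i1 i2 i3 i4 by simp
  also have "\<dots> = 2 * ((\<integral>x. AA \<phi> i (Y i x) * H (Y i x) \<partial>M) - (\<integral>x. AA \<phi> i (Y i x) \<partial>M) * (\<integral>x. H (Y i x) \<partial>M))"
    unfolding e1 e2 f1 f2 f3 by simp
  finally show "(\<integral>x. \<phi> (WW x) * G (Y' i x - Y i x) \<partial>M) - (\<integral>x. \<phi> (WW x) \<partial>M) * (\<integral>x. G (Y' i x - Y i x) \<partial>M)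
         = (\<integral>x. (AA \<phi> i (Y i x) - AA \<phi> i (Y' i x)) * (H (Y i x) - H (Y' i x)) \<partial>M) / 2"
    unfolding a b c b'(2) by simp
qed

end

lemma gg_diff_sum:
  "(\<Sum>j\<in>UNIV. \<Sum>k\<in>UNIV. \<bar>gg j k a - gg j k b\<bar>) \<le> l1 (a - b) * (l1 a + l1 b)"
proof -
  let ?r = "\<lambda>u j. real_of_int (u $ j)"
  have pt: "\<And>j k. \<bar>gg j k a - gg j k b\<bar> \<le> \<bar>?r (a - b) j\<bar> * \<bar>?r a k\<bar> + \<bar>?r b j\<bar> * \<bar>?r (a - b) k\<bar>"
  proof -
    fix j k
    have "gg j k a - gg j k b = ?r (a - b) j * ?r a k + ?r b j * ?r (a - b) k"
      by (simp add: gg_def algebra_simps)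
    then show "\<bar>gg j k a - gg j k b\<bar> \<le> \<bar>?r (a - b) j\<bar> * \<bar>?r a k\<bar> + \<bar>?r b j\<bar> * \<bar>?r (a - b) k\<bar>"
      by (metis abs_mult abs_triangle_ineq)
  qed
  have "(\<Sum>j\<in>UNIV. \<Sum>k\<in>UNIV. \<bar>gg j k a - gg j k b\<bar>) \<le>
        (\<Sum>j\<in>UNIV. \<Sum>k\<in>UNIV. \<bar>?r (a - b) j\<bar> * \<bar>?r a k\<bar> + \<bar>?r b j\<bar> * \<bar>?r (a - b) k\<bar>)"
    by (intro sum_mono pt)
  also have "\<dots> = l1 (a - b) * l1 a + l1 b * l1 (a - b)"
    by (simp add: sum.distrib l1_def sum_product)
  finally show ?thesis by (simp add: algebra_simps)
qed

lemma cube_ineq: "0 \<le> c \<Longrightarrow> 0 \<le> a \<Longrightarrow> (c::real) * c * a \<le> c ^ 3 + a ^ 3"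
proof (cases "c \<le> a")
  case True
  assume "0 \<le> c" "0 \<le> a"
  then have "c * c * a \<le> a * a * a" using True by (intro mult_mono) (auto intro: mult_mono)
  then show ?thesis using \<open>0 \<le> c\<close> by (simp add: power3_eq_cube) (smt (verit) mult_nonneg_nonneg)
next
  case False
  assume "0 \<le> c" "0 \<le> a"
  then have "c * c * a \<le> c * c * c" using False by (intro mult_left_mono) auto
  then show ?thesis using \<open>0 \<le> a\<close> by (simp add: power3_eq_cube) (smt (verit) mult_nonneg_nonneg)
qed

context setting begin

lemma eps_nonneg: "0 \<le> eps"
proof -
  have i: "1 \<in> {1..m}" using m_pos by simp
  let ?P = "distr M (count_space UNIV) (VV 1)"
  let ?Q = "distr M (count_space UNIV) (\<lambda>x. VV 1 x + unitv (undefined::'d))"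
  have fV: "VV 1 \<in> measurable M (count_space UNIV)" by (rule V_meas[OF i])
  have fV': "(\<lambda>x. VV 1 x + unitv (undefined::'d)) \<in> measurable M (count_space UNIV)"
    by (rule meas_count_comb[OF fV measurable_count_space_const, where h="(+)"])
  have "\<bar>measure ?P {} - measure ?Q {}\<bar> \<le> tv_dist ?P ?Q"
    by (rule tv_set[OF prob_space_distr[OF fV] prob_space_distr[OF fV']]) simp
  also have "\<dots> \<le> eps" by (rule tv_le[OF i])
  finally show ?thesis by simp
qed

lemma pairm: "i \<in> {1..m} \<Longrightarrow> (\<lambda>x. h (Y i x) (Y' i x)) \<in> measurable M N"
  if "\<And>a b. h a b \<in> space N"
  using meas_count_real[OF meas_count_comb[OF Y_meas Y'_meas, where h=Pair], of i i "\<lambda>p. h (fst p) (snd p)" N] that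
  by simp

lemma intY'c:
  assumes i: "i \<in> {1..m}" and b: "\<And>u. \<bar>h u\<bar> \<le> c * (1 + l1 u ^ 3)"
  shows "integrable M (\<lambda>x. h (Y' i x - y))"
proof -
  have f: "(\<lambda>x. Y' i x - y) \<in> measurable M (count_space UNIV)"
    by (rule meas_count_comb[OF Y'_meas[OF i] measurable_count_space_const, where h="(-)"])
  have "integrable M (\<lambda>x. l1 (Y' i x - y) ^ 3)"
    by (rule int_diff3[OF Y'_meas[OF i] measurable_count_space_const mY'[OF i] int_const3])
  then show ?thesis by (rule int_bound3[OF f _ b])
qed

lemma l1_b: "\<bar>l1 u\<bar> \<le> 1 * (1 + l1 u ^ 3)" using pow_le_1_3'[of "l1 u"] by simp
lemma l13_b: "\<bar>l1 u ^ 3\<bar> \<le> 1 * (1 + l1 u ^ 3)" by simp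
lemma gg_b: "\<bar>gg j k u\<bar> \<le> 1 * (1 + l1 u ^ 3)"
  using gg_bound[of j k u] pow_le_1_3[of "l1 u"] by simp

lemma H_diff:
  assumes i: "i \<in> {1..m}"
  shows "(\<Sum>j\<in>UNIV. \<Sum>k\<in>UNIV. \<bar>(\<integral>x. gg j k (Y' i x - y) \<partial>M) - (\<integral>x. gg j k (Y' i x - z) \<partial>M)\<bar>)
     \<le> (\<integral>x. l1 (z - y) * (l1 (Y' i x - y) + l1 (Y' i x - z)) \<partial>M)"
proof -
  have ig: "\<And>j k y. integrable M (\<lambda>x. gg j k (Y' i x - y))" by (rule intY'c[OF i gg_b])
  have il: "\<And>y. integrable M (\<lambda>x. l1 (Y' i x - y))" by (rule intY'c[OF i l1_b])
  have igd: "\<And>j k. integrable M (\<lambda>x. \<bar>gg j k (Y' i x - y) - gg j k (Y' i x - z)\<bar>)"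
    using ig by auto
  have "(\<Sum>j\<in>UNIV. \<Sum>k\<in>UNIV. \<bar>(\<integral>x. gg j k (Y' i x - y) \<partial>M) - (\<integral>x. gg j k (Y' i x - z) \<partial>M)\<bar>)
     \<le> (\<Sum>j\<in>UNIV. \<Sum>k\<in>UNIV. (\<integral>x. \<bar>gg j k (Y' i x - y) - gg j k (Y' i x - z)\<bar> \<partial>M))"
  proof (intro sum_mono)
    fix j k
    have "(\<integral>x. gg j k (Y' i x - y) \<partial>M) - (\<integral>x. gg j k (Y' i x - z) \<partial>M) = (\<integral>x. gg j k (Y' i x - y) - gg j k (Y' i x - z) \<partial>M)"
      using ig by simp
    then show "\<bar>(\<integral>x. gg j k (Y' i x - y) \<partial>M) - (\<integral>x. gg j k (Y' i x - z) \<partial>M)\<bar> \<le> (\<integral>x. \<bar>gg j k (Y' i x - y) - gg j k (Y' i x - z)\<bar> \<partial>M)"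
      by simp
  qed
  also have "\<dots> = (\<integral>x. (\<Sum>j\<in>UNIV. \<Sum>k\<in>UNIV. \<bar>gg j k (Y' i x - y) - gg j k (Y' i x - z)\<bar>) \<partial>M)"
    using igd by (simp add: Bochner_Integration.integral_sum Bochner_Integration.integrable_sum)
  also have "\<dots> \<le> (\<integral>x. l1 (z - y) * (l1 (Y' i x - y) + l1 (Y' i x - z)) \<partial>M)"
  proof (rule integral_mono)
    show "integrable M (\<lambda>x. \<Sum>j\<in>UNIV. \<Sum>k\<in>UNIV. \<bar>gg j k (Y' i x - y) - gg j k (Y' i x - z)\<bar>)"
      using igd by (simp add: Bochner_Integration.integrable_sum)
    show "integrable M (\<lambda>x. l1 (z - y) * (l1 (Y' i x - y) + l1 (Y' i x - z)))"
      using il by simp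
    fix x
    have "(Y' i x - y) - (Y' i x - z) = z - y" by simp
    then show "(\<Sum>j\<in>UNIV. \<Sum>k\<in>UNIV. \<bar>gg j k (Y' i x - y) - gg j k (Y' i x - z)\<bar>) \<le> l1 (z - y) * (l1 (Y' i x - y) + l1 (Y' i x - z))"
      using gg_diff_sum[of "Y' i x - y" "Y' i x - z"] by simp
  qed
  finally show ?thesis .
qed

end

context setting begin

lemma pairm_b: "i \<in> {1..m} \<Longrightarrow> (\<lambda>x. (h (Y i x) (Y' i x) :: ennreal)) \<in> borel_measurable M"
  by (rule pairm) auto

lemma per_i:
  fixes \<phi> :: "'d \<Rightarrow> 'd \<Rightarrow> int^'d \<Rightarrow> real"
  assumes i: "i \<in> {1..m}" and phi: "\<And>j k w. \<phi> j k w \<in> {-1,0,1}"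
  shows "(\<Sum>j\<in>UNIV. \<Sum>k\<in>UNIV. \<bar>(\<integral>x. \<phi> j k (WW x) * gg j k (Y' i x - Y i x) \<partial>M)
            - (\<integral>x. \<phi> j k (WW x) \<partial>M) * (\<integral>x. gg j k (Y' i x - Y i x) \<partial>M)\<bar>)
         \<le> 4 * eps * (\<integral>x. l1 (Y' i x - Y i x) ^ 3 \<partial>M)"
proof -
  define H where "H j k y = (\<integral>x. gg j k (Y' i x - y) \<partial>M)" for j k y
  define T where "T j k = (\<integral>x. \<phi> j k (WW x) * gg j k (Y' i x - Y i x) \<partial>M)
            - (\<integral>x. \<phi> j k (WW x) \<partial>M) * (\<integral>x. gg j k (Y' i x - Y i x) \<partial>M)" for j k
  define F where "F j k a b = ennreal (eps * l1 (b - a) * \<bar>H j k a - H j k b\<bar>)" for j k a b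
  define Q where "Q y = (\<integral>x. l1 (Y' i x - y) ^ 3 \<partial>M)" for y
  have e0: "0 \<le> eps" by (rule eps_nonneg)
  have A: "ennreal \<bar>T j k\<bar> \<le> (\<integral>\<^sup>+x. F j k (Y i x) (Y' i x) \<partial>M)" for j k
  proof -
    define D where "D x = (AA (\<phi> j k) i (Y i x) - AA (\<phi> j k) i (Y' i x)) * (H j k (Y i x) - H j k (Y' i x))" for x
    have phijk: "\<And>w. \<phi> j k w \<in> {-1,0,1}" by (rule phi)
    note cv = cov[OF i phijk gg_b[of j k]]
    have TD: "T j k = integral\<^sup>L M D / 2" unfolding T_def D_def H_def using cv(1) by simp
    have iD: "integrable M D" unfolding D_def H_def using cv(2) by simp
    have "\<bar>T j k\<bar> \<le> (\<integral>x. \<bar>D x\<bar> / 2 \<partial>M)" unfolding TD by simp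
    then have "ennreal \<bar>T j k\<bar> \<le> ennreal (\<integral>x. \<bar>D x\<bar> / 2 \<partial>M)" by (rule ennreal_leI)
    also have "\<dots> = (\<integral>\<^sup>+x. ennreal (\<bar>D x\<bar> / 2) \<partial>M)"
      by (rule nn_integral_eq_integral[symmetric]) (use iD in auto)
    also have "\<dots> \<le> (\<integral>\<^sup>+x. F j k (Y i x) (Y' i x) \<partial>M)"
    proof (rule nn_integral_mono)
      fix x
      have "\<bar>AA (\<phi> j k) i (Y i x) - AA (\<phi> j k) i (Y' i x)\<bar> \<le> 2 * eps * l1 (Y' i x - Y i x)"
        by (rule AA_lip[OF i phijk])
      then have "\<bar>AA (\<phi> j k) i (Y i x) - AA (\<phi> j k) i (Y' i x)\<bar> * \<bar>H j k (Y i x) - H j k (Y' i x)\<bar>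
          \<le> (2 * eps * l1 (Y' i x - Y i x)) * \<bar>H j k (Y i x) - H j k (Y' i x)\<bar>"
        by (rule mult_right_mono) simp
      then have "\<bar>D x\<bar> / 2 \<le> eps * l1 (Y' i x - Y i x) * \<bar>H j k (Y i x) - H j k (Y' i x)\<bar>"
        unfolding D_def abs_mult by simp
      then show "ennreal (\<bar>D x\<bar> / 2) \<le> F j k (Y i x) (Y' i x)" unfolding F_def by (rule ennreal_leI)
    qed
    finally show ?thesis .
  qed
  have B: "ennreal (\<Sum>j\<in>UNIV. \<Sum>k\<in>UNIV. \<bar>T j k\<bar>) \<le>
     (\<integral>\<^sup>+x. ennreal (eps * l1 (Y' i x - Y i x) * (\<Sum>j\<in>UNIV. \<Sum>k\<in>UNIV. \<bar>H j k (Y i x) - H j k (Y' i x)\<bar>)) \<partial>M)"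
  proof -
    have "ennreal (\<Sum>j\<in>UNIV. \<Sum>k\<in>UNIV. \<bar>T j k\<bar>) = (\<Sum>j\<in>UNIV. \<Sum>k\<in>UNIV. ennreal \<bar>T j k\<bar>)"
      by (simp add: sum_nonneg)
    also have "\<dots> \<le> (\<Sum>j\<in>UNIV. \<Sum>k\<in>UNIV. (\<integral>\<^sup>+x. F j k (Y i x) (Y' i x) \<partial>M))"
      by (intro sum_mono A)
    also have "\<dots> = (\<Sum>j\<in>UNIV. (\<integral>\<^sup>+x. (\<Sum>k\<in>UNIV. F j k (Y i x) (Y' i x)) \<partial>M))"
      by (intro sum.cong refl nn_integral_sum[symmetric] pairm_b[OF i])
    also have "\<dots> = (\<integral>\<^sup>+x. (\<Sum>j\<in>UNIV. \<Sum>k\<in>UNIV. F j k (Y i x) (Y' i x)) \<partial>M)"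
      by (rule nn_integral_sum[symmetric]) (rule pairm_b[OF i, where h="\<lambda>a b. \<Sum>k\<in>UNIV. F _ k a b"])
    also have "\<dots> = (\<integral>\<^sup>+x. ennreal (eps * l1 (Y' i x - Y i x) * (\<Sum>j\<in>UNIV. \<Sum>k\<in>UNIV. \<bar>H j k (Y i x) - H j k (Y' i x)\<bar>)) \<partial>M)"
    proof (rule nn_integral_cong)
      fix x
      have "(\<Sum>j\<in>UNIV. \<Sum>k\<in>UNIV. F j k (Y i x) (Y' i x)) = ennreal (\<Sum>j\<in>UNIV. \<Sum>k\<in>UNIV. eps * l1 (Y' i x - Y i x) * \<bar>H j k (Y i x) - H j k (Y' i x)\<bar>)"
        unfolding F_def using e0 by (simp add: sum_nonneg)
      then show "(\<Sum>j\<in>UNIV. \<Sum>k\<in>UNIV. F j k (Y i x) (Y' i x)) = ennreal (eps * l1 (Y' i x - Y i x) * (\<Sum>j\<in>UNIV. \<Sum>k\<in>UNIV. \<bar>H j k (Y i x) - H j k (Y' i x)\<bar>))"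
        by (simp add: sum_distrib_left)
    qed
    finally show ?thesis .
  qed
  have CDE: "eps * l1 (Y' i x - Y i x) * (\<Sum>j\<in>UNIV. \<Sum>k\<in>UNIV. \<bar>H j k (Y i x) - H j k (Y' i x)\<bar>)
      \<le> eps * (2 * l1 (Y' i x - Y i x) ^ 3 + Q (Y i x) + Q (Y' i x))" for x
  proof -
    define c where "c = l1 (Y' i x - Y i x)"
    define a where "a x' = l1 (Y' i x' - Y i x)" for x'
    define b where "b x' = l1 (Y' i x' - Y' i x)" for x'
    have c0: "0 \<le> c" by (simp add: c_def)
    have ia: "integrable M a" "integrable M (\<lambda>x'. a x' ^ 3)" unfolding a_def
      by (rule intY'c[OF i l1_b], rule intY'c[OF i l13_b])
    have ib: "integrable M b" "integrable M (\<lambda>x'. b x' ^ 3)" unfolding b_def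
      by (rule intY'c[OF i l1_b], rule intY'c[OF i l13_b])
    have "(\<Sum>j\<in>UNIV. \<Sum>k\<in>UNIV. \<bar>H j k (Y i x) - H j k (Y' i x)\<bar>) \<le> (\<integral>x'. c * (a x' + b x') \<partial>M)"
      unfolding H_def c_def a_def b_def by (rule H_diff[OF i])
    then have "eps * c * (\<Sum>j\<in>UNIV. \<Sum>k\<in>UNIV. \<bar>H j k (Y i x) - H j k (Y' i x)\<bar>) \<le> eps * c * (\<integral>x'. c * (a x' + b x') \<partial>M)"
      using e0 c0 by (intro mult_left_mono) auto
    also have "\<dots> = (\<integral>x'. eps * c * (c * (a x' + b x')) \<partial>M)" by simp
    also have "\<dots> \<le> (\<integral>x'. eps * (2 * c ^ 3 + a x' ^ 3 + b x' ^ 3) \<partial>M)"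
    proof (rule integral_mono)
      show "integrable M (\<lambda>x'. eps * c * (c * (a x' + b x')))" using ia ib by simp
      show "integrable M (\<lambda>x'. eps * (2 * c ^ 3 + a x' ^ 3 + b x' ^ 3))" using ia ib by simp
      fix x'
      have "c * c * a x' \<le> c ^ 3 + a x' ^ 3" "c * c * b x' \<le> c ^ 3 + b x' ^ 3"
        using c0 by (auto intro!: cube_ineq simp: a_def b_def)
      then have "c * (c * (a x' + b x')) \<le> 2 * c ^ 3 + a x' ^ 3 + b x' ^ 3" by (simp add: algebra_simps)
      then show "eps * c * (c * (a x' + b x')) \<le> eps * (2 * c ^ 3 + a x' ^ 3 + b x' ^ 3)"
        using e0 by (simp add: mult.assoc mult_left_mono)
    qed
    also have "\<dots> = eps * (2 * c ^ 3 + Q (Y i x) + Q (Y' i x))"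
      using ia ib by (simp add: Q_def a_def b_def prob_space)
    finally show ?thesis unfolding c_def .
  qed
  have i3: "integrable M (\<lambda>x. l1 (Y' i x - Y i x) ^ 3)"
    by (rule int_diff3[OF Y'_meas[OF i] Y_meas[OF i] mY'[OF i] mY[OF i]])
  note fubQ = indep_fub[OF G2(1)[OF i], where f="\<lambda>y y'. l1 (y' - y) ^ 3", OF i3]
  have iQ: "integrable M (\<lambda>x. Q (Y i x))" using fubQ(1) by (simp add: Q_def)
  have iQ': "integrable M (\<lambda>x. Q (Y' i x))" using iQ copy_intgr[OF i, of Q] by simp
  have EQ: "(\<integral>x. Q (Y i x) \<partial>M) = (\<integral>x. l1 (Y' i x - Y i x) ^ 3 \<partial>M)" using fubQ(2) by (simp add: Q_def)
  have EQ': "(\<integral>x. Q (Y' i x) \<partial>M) = (\<integral>x. Q (Y i x) \<partial>M)" by (rule copy_int[OF i])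
  have Q0: "\<And>y. 0 \<le> Q y" unfolding Q_def by (rule integral_nonneg_AE) auto
  have "ennreal (\<Sum>j\<in>UNIV. \<Sum>k\<in>UNIV. \<bar>T j k\<bar>) \<le> (\<integral>\<^sup>+x. ennreal (eps * (2 * l1 (Y' i x - Y i x) ^ 3 + Q (Y i x) + Q (Y' i x))) \<partial>M)"
    by (rule order_trans[OF B nn_integral_mono]) (rule ennreal_leI[OF CDE])
  also have "\<dots> = ennreal (\<integral>x. eps * (2 * l1 (Y' i x - Y i x) ^ 3 + Q (Y i x) + Q (Y' i x)) \<partial>M)"
    by (rule nn_integral_eq_integral) (use i3 iQ iQ' e0 Q0 in auto)
  also have "(\<integral>x. eps * (2 * l1 (Y' i x - Y i x) ^ 3 + Q (Y i x) + Q (Y' i x)) \<partial>M) = 4 * eps * (\<integral>x. l1 (Y' i x - Y i x) ^ 3 \<partial>M)"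
    using i3 iQ iQ' EQ EQ' by simp
  finally have "ennreal (\<Sum>j\<in>UNIV. \<Sum>k\<in>UNIV. \<bar>T j k\<bar>) \<le> ennreal (4 * eps * (\<integral>x. l1 (Y' i x - Y i x) ^ 3 \<partial>M))" .
  moreover have "0 \<le> 4 * eps * (\<integral>x. l1 (Y' i x - Y i x) ^ 3 \<partial>M)" using e0 by simp
  ultimately show ?thesis unfolding T_def by (simp add: ennreal_le_iff)
qed

end

context setting begin

definition "FF = vimage_algebra (space M) WW (count_space UNIV)"

lemma FF_sub: "finite_measure_subalgebra M FF"
proof -
  have "subalgebra M FF"
    unfolding subalgebra_def FF_def
  proof
    show "space (vimage_algebra (space M) WW (count_space UNIV)) = space M" by simp
    have "sets (vimage_algebra (space M) WW (count_space UNIV)) = {WW -` A \<inter> space M | A. A \<in> sets (count_space UNIV)}"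
      by (rule sets_vimage_algebra2) simp
    then show "sets (vimage_algebra (space M) WW (count_space UNIV)) \<subseteq> sets M"
      using measurable_sets[OF W_meas] by auto
  qed
  then show ?thesis by unfold_locales
qed

lemma FF_meas: "(\<lambda>x. (h (WW x) :: real)) \<in> borel_measurable FF"
proof -
  have "WW \<in> measurable FF (count_space UNIV)"
    unfolding FF_def by (rule measurable_vimage_algebra1) simp
  then show ?thesis by (rule meas_count_real) simp
qed

lemma factor:
  fixes f :: "'a \<Rightarrow> real"
  assumes f: "f \<in> borel_measurable FF"
  shows "\<exists>\<psi>. \<forall>x\<in>space M. f x = \<psi> (WW x)"
proof -
  have sets: "sets FF = {WW -` A \<inter> space M | A. A \<in> sets (count_space UNIV)}"
    unfolding FF_def by (rule sets_vimage_algebra2) simp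
  have key: "f x' = f x" if x: "x \<in> space M" and x': "x' \<in> space M" and eq: "WW x' = WW x" for x x'
  proof -
    have "f -` {f x} \<inter> space FF \<in> sets FF" using f by (rule measurable_sets) simp
    then obtain A where A: "f -` {f x} \<inter> space FF = WW -` A \<inter> space M" using sets by auto
    have "x \<in> f -` {f x} \<inter> space FF" using x by (simp add: FF_def)
    then have "WW x \<in> A" using A by auto
    then have "x' \<in> f -` {f x} \<inter> space FF" using A x' eq by auto
    then show ?thesis by simp
  qed
  define \<psi> where "\<psi> w = f (SOME x. x \<in> space M \<and> WW x = w)" for w
  have "\<forall>x\<in>space M. f x = \<psi> (WW x)"
  proof
    fix x assume x: "x \<in> space M"
    have ex: "\<exists>x'. x' \<in> space M \<and> WW x' = WW x" using x by blast
    have "(SOME x'. x' \<in> space M \<and> WW x' = WW x) \<in> space M \<and> WW (SOME x'. x' \<in> space M \<and> WW x' = WW x) = WW x"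
      by (rule someI_ex[OF ex])
    then show "f x = \<psi> (WW x)" unfolding \<psi>_def using key[OF x] by metis
  qed
  then show ?thesis by blast
qed

end

context setting begin

lemma diff_meas: "i \<in> {1..m} \<Longrightarrow> (\<lambda>x. Y' i x - Y i x) \<in> measurable M (count_space UNIV)"
  by (rule meas_count_comb[OF Y'_meas Y_meas, where h="(-)"])

lemma int_diff_b:
  assumes i: "i \<in> {1..m}" and b: "\<And>u. \<bar>h u\<bar> \<le> c * (1 + l1 u ^ 3)"
  shows "integrable M (\<lambda>x. h (Y' i x - Y i x))"
  by (rule int_bound3[OF diff_meas[OF i] int_diff3[OF Y'_meas[OF i] Y_meas[OF i] mY'[OF i] mY[OF i]] b])

lemma main_R2:
  defines "gK \<equiv> \<lambda>j k x. gg j k (Y' (K x) x - Y (K x) x)"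
  shows "(\<integral>x. (\<Sum>j\<in>UNIV. \<Sum>k\<in>UNIV. \<bar>real_cond_exp M FF (gK j k) x - (\<integral>y. gK j k y \<partial>M)\<bar>) \<partial>M)
     \<le> 4 * eps * (\<integral>x. l1 (Y' (K x) x - Y (K x) x) ^ 3 \<partial>M)"
proof -
  interpret SF: finite_measure_subalgebra M FF by (rule FF_sub)
  define R where "R j k x = real_cond_exp M FF (gK j k) x - (\<integral>y. gK j k y \<partial>M)" for j k x
  have igK: "integrable M (gK j k)" for j k
    using K_step(1)[of "\<lambda>i w y y'. gg j k (y' - y)"] int_diff_b[OF _ gg_b[of j k]] by (simp add: gK_def)
  have iR: "integrable M (R j k)" for j k
    unfolding R_def using SF.real_cond_exp_int(1)[OF igK] by simp
  have RF: "R j k \<in> borel_measurable FF" for j k unfolding R_def by simp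
  have "\<exists>\<psi>. \<forall>x\<in>space M. R j k x = \<psi> (WW x)" for j k by (rule factor[OF RF])
  then obtain \<psi> where \<psi>: "\<And>j k x. x \<in> space M \<Longrightarrow> R j k x = \<psi> j k (WW x)" by metis
  define \<phi> where "\<phi> j k w = sgn (\<psi> j k w)" for j k w
  have phi: "\<phi> j k w \<in> {-1,0,1}" for j k w unfolding \<phi>_def by (simp add: sgn_if)
  define T where "T i j k = (\<integral>x. \<phi> j k (WW x) * gg j k (Y' i x - Y i x) \<partial>M)
            - (\<integral>x. \<phi> j k (WW x) \<partial>M) * (\<integral>x. gg j k (Y' i x - Y i x) \<partial>M)" for i j k
  have absR: "(\<integral>x. \<bar>R j k x\<bar> \<partial>M) = (\<Sum>i\<in>{1..m}. T i j k) / real m" for j k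
  proof -
    have phijk: "\<And>w. \<phi> j k w \<in> {-1,0,1}" by (rule phi)
    have phiF: "(\<lambda>x. \<phi> j k (WW x)) \<in> borel_measurable FF" by (rule FF_meas)
    have phiM: "(\<lambda>x. \<phi> j k (WW x)) \<in> borel_measurable M" by (rule meas_count_real[OF W_meas]) simp
    have pb: "\<And>x. \<bar>\<phi> j k (WW x)\<bar> \<le> 1" by (rule phi_abs[OF phi])
    have ipg: "integrable M (\<lambda>x. \<phi> j k (WW x) * gK j k x)" by (rule bdd_int[OF igK phiM pb])
    have "(\<integral>x. \<bar>R j k x\<bar> \<partial>M) = (\<integral>x. \<phi> j k (WW x) * real_cond_exp M FF (gK j k) x - (\<integral>y. gK j k y \<partial>M) * \<phi> j k (WW x) \<partial>M)"
    proof (rule Bochner_Integration.integral_cong[OF refl])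
      fix x assume x: "x \<in> space M"
      have "\<bar>R j k x\<bar> = \<phi> j k (WW x) * R j k x" unfolding \<phi>_def \<psi>[OF x] by (simp add: abs_sgn)
      then show "\<bar>R j k x\<bar> = \<phi> j k (WW x) * real_cond_exp M FF (gK j k) x - (\<integral>y. gK j k y \<partial>M) * \<phi> j k (WW x)"
        by (simp add: R_def algebra_simps)
    qed
    also have "\<dots> = (\<integral>x. \<phi> j k (WW x) * real_cond_exp M FF (gK j k) x \<partial>M) - (\<integral>y. gK j k y \<partial>M) * (\<integral>x. \<phi> j k (WW x) \<partial>M)"
      using SF.real_cond_exp_intg(1)[OF ipg phiF borel_measurable_integrable[OF igK]] int_phi[where \<phi>="\<phi> j k", OF W_meas phi] by (simp add: gK_def)
    also have "(\<integral>x. \<phi> j k (WW x) * real_cond_exp M FF (gK j k) x \<partial>M) = (\<integral>x. \<phi> j k (WW x) * gK j k x \<partial>M)"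
      using SF.real_cond_exp_intg(2)[OF ipg phiF borel_measurable_integrable[OF igK]] by (simp add: gK_def)
    also have "(\<integral>x. \<phi> j k (WW x) * gK j k x \<partial>M) = (\<Sum>i\<in>{1..m}. \<integral>x. \<phi> j k (WW x) * gg j k (Y' i x - Y i x) \<partial>M) / real m"
      using K_step(2)[of "\<lambda>i w y y'. \<phi> j k w * gg j k (y' - y)"] bdd_int[OF int_diff_b[OF _ gg_b[of j k]] phiM pb]
      by (simp add: gK_def)
    also have "(\<integral>y. gK j k y \<partial>M) = (\<Sum>i\<in>{1..m}. \<integral>x. gg j k (Y' i x - Y i x) \<partial>M) / real m"
      using K_step(2)[of "\<lambda>i w y y'. gg j k (y' - y)"] int_diff_b[OF _ gg_b[of j k]] by (simp add: gK_def)
    finally show ?thesis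
      by (simp add: T_def sum_subtractf sum_distrib_right diff_divide_distrib mult.commute sum_distrib_left)
  qed
  have "(\<integral>x. (\<Sum>j\<in>UNIV. \<Sum>k\<in>UNIV. \<bar>R j k x\<bar>) \<partial>M) = (\<Sum>j\<in>UNIV. \<Sum>k\<in>UNIV. (\<integral>x. \<bar>R j k x\<bar> \<partial>M))"
    using iR by (simp add: Bochner_Integration.integral_sum Bochner_Integration.integrable_sum)
  also have "\<dots> = (\<Sum>i\<in>{1..m}. \<Sum>j\<in>UNIV. \<Sum>k\<in>UNIV. T i j k) / real m"
  proof -
    have "(\<Sum>j\<in>UNIV. \<Sum>k\<in>UNIV. \<Sum>i\<in>{1..m}. T i j k) = (\<Sum>j\<in>UNIV. \<Sum>i\<in>{1..m}. \<Sum>k\<in>UNIV. T i j k)"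
      by (rule sum.cong[OF refl], rule sum.swap)
    also have "\<dots> = (\<Sum>i\<in>{1..m}. \<Sum>j\<in>UNIV. \<Sum>k\<in>UNIV. T i j k)"
      by (rule sum.swap)
    finally show ?thesis unfolding absR by (simp add: sum_divide_distrib[symmetric])
  qed
  also have "\<dots> \<le> (\<Sum>i\<in>{1..m}. 4 * eps * (\<integral>x. l1 (Y' i x - Y i x) ^ 3 \<partial>M)) / real m"
  proof (intro divide_right_mono sum_mono)
    fix i assume i: "i \<in> {1..m}"
    have "(\<Sum>j\<in>UNIV. \<Sum>k\<in>UNIV. T i j k) \<le> (\<Sum>j\<in>UNIV. \<Sum>k\<in>UNIV. \<bar>T i j k\<bar>)"
      by (intro sum_mono) simp
    also have "\<dots> \<le> 4 * eps * (\<integral>x. l1 (Y' i x - Y i x) ^ 3 \<partial>M)"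
      unfolding T_def by (rule per_i[OF i phi])
    finally show "(\<Sum>j\<in>UNIV. \<Sum>k\<in>UNIV. T i j k) \<le> 4 * eps * (\<integral>x. l1 (Y' i x - Y i x) ^ 3 \<partial>M)" .
  qed simp
  also have "\<dots> = 4 * eps * (\<integral>x. l1 (Y' (K x) x - Y (K x) x) ^ 3 \<partial>M)"
    using K_step(2)[of "\<lambda>i w y y'. l1 (y' - y) ^ 3"] int_diff_b[OF _ l13_b]
    by (simp add: sum_distrib_left)
  finally show ?thesis unfolding R_def .
qed

end

lemma coord_b: "\<bar>real_of_int (u $ j)\<bar> \<le> 1 * (1 + l1 u ^ 3)"
  using l1_coord[of u j] pow_le_1_3'[of "l1 u"] by simp

context setting begin

lemma cond_first:
  "AE x in M. real_cond_exp M FF (\<lambda>y. real_of_int ((Y' (K y) y - Y (K y) y) $ j)) x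
     = - (real_of_int (WW x $ j) - (\<integral>y. real_of_int (WW y $ j) \<partial>M)) / real m"
proof -
  interpret SF: finite_measure_subalgebra M FF by (rule FF_sub)
  define f where "f y = real_of_int ((Y' (K y) y - Y (K y) y) $ j)" for y
  define E where "E = (\<integral>y. real_of_int (WW y $ j) \<partial>M)"
  define g where "g x = - (real_of_int (WW x $ j) - E) / real m" for x
  have iYj: "integrable M (\<lambda>x. real_of_int (Y i x $ j))" if i: "i \<in> {1..m}" for i
    by (rule int_bound3[OF Y_meas[OF i] mY[OF i] coord_b])
  have iY'j: "integrable M (\<lambda>x. real_of_int (Y' i x $ j))" if i: "i \<in> {1..m}" for i
    by (rule int_bound3[OF Y'_meas[OF i] mY'[OF i] coord_b])
  have Wj: "real_of_int (WW x $ j) = (\<Sum>i\<in>{1..m}. real_of_int (Y i x $ j))" for x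
    by (simp add: WW_def)
  have iWj: "integrable M (\<lambda>x. real_of_int (WW x $ j))"
    unfolding Wj by (rule Bochner_Integration.integrable_sum) (rule iYj)
  have ifd: "integrable M f"
    unfolding f_def using K_step(1)[of "\<lambda>i w y y'. real_of_int ((y' - y) $ j)"] int_diff_b[OF _ coord_b[of _ j]]
    by (simp add: f_def)
  have ig: "integrable M g" unfolding g_def using iWj by simp
  have gF: "g \<in> borel_measurable FF" unfolding g_def by (rule FF_meas)
  have "AE x in M. real_cond_exp M FF f x = g x"
  proof (rule SF.real_cond_exp_charact[OF _ ifd ig gF])
    fix A assume A: "A \<in> sets FF"
    have sets: "sets FF = {WW -` B \<inter> space M | B. B \<in> sets (count_space UNIV)}"
      unfolding FF_def by (rule sets_vimage_algebra2) simp
    obtain B where AB: "A = WW -` B \<inter> space M" using A sets by auto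
    have ind: "\<And>x. x \<in> space M \<Longrightarrow> indicator A x = (indicator B (WW x) :: real)"
      unfolding AB by (simp add: indicator_def)
    define iB where "iB x = (indicator B (WW x) :: real)" for x
    have iBm: "iB \<in> borel_measurable M" unfolding iB_def by (rule meas_count_real[OF W_meas]) simp
    have iBb: "\<And>x. \<bar>iB x\<bar> \<le> 1" unfolding iB_def by (simp add: indicator_def)
    have iiB: "integrable M iB" by (rule integrable_const_bound[where B=1]) (use iBb iBm in auto)
    have set_eq: "(\<integral>x\<in>A. h x \<partial>M) = (\<integral>x. iB x * h x \<partial>M)" for h :: "'a \<Rightarrow> real"
      unfolding set_lebesgue_integral_def iB_def
      by (rule Bochner_Integration.integral_cong[OF refl]) (simp add: ind)
    have Y'part: "(\<integral>x. iB x * real_of_int (Y' i x $ j) \<partial>M) = (\<integral>x. iB x \<partial>M) * (\<integral>x. real_of_int (Y i x $ j) \<partial>M)"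
      if i: "i \<in> {1..m}" for i
    proof -
      have "(\<integral>x. iB x * real_of_int (Y' i x $ j) \<partial>M) = (\<integral>x. iB x \<partial>M) * (\<integral>x. real_of_int (Y' i x $ j) \<partial>M)"
        unfolding iB_def
        by (rule indep_var_lebesgue_integral[OF G5[OF i, of "indicator B" "\<lambda>y. real_of_int (y $ j)"]])
           (use iiB[unfolded iB_def] iY'j[OF i] in simp_all)
      also have "(\<integral>x. real_of_int (Y' i x $ j) \<partial>M) = (\<integral>x. real_of_int (Y i x $ j) \<partial>M)"
        by (rule copy_int[OF i])
      finally show ?thesis .
    qed
    have "(\<integral>x\<in>A. f x \<partial>M) = (\<integral>x. iB x * f x \<partial>M)" by (rule set_eq)
    also have "\<dots> = (\<Sum>i\<in>{1..m}. \<integral>x. iB x * real_of_int ((Y' i x - Y i x) $ j) \<partial>M) / real m"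
      using K_step(2)[of "\<lambda>i w y y'. indicator B w * real_of_int ((y' - y) $ j)"]
        bdd_int[OF int_diff_b[OF _ coord_b[of _ j]] iBm iBb]
      by (simp add: f_def iB_def)
    also have "\<dots> = (\<Sum>i\<in>{1..m}. (\<integral>x. iB x \<partial>M) * (\<integral>x. real_of_int (Y i x $ j) \<partial>M) - (\<integral>x. iB x * real_of_int (Y i x $ j) \<partial>M)) / real m"
    proof -
      have "(\<integral>x. iB x * real_of_int ((Y' i x - Y i x) $ j) \<partial>M) =
            (\<integral>x. iB x \<partial>M) * (\<integral>x. real_of_int (Y i x $ j) \<partial>M) - (\<integral>x. iB x * real_of_int (Y i x $ j) \<partial>M)"
        if i: "i \<in> {1..m}" for i
      proof -
        have "(\<integral>x. iB x * real_of_int ((Y' i x - Y i x) $ j) \<partial>M) =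
           (\<integral>x. iB x * real_of_int (Y' i x $ j) - iB x * real_of_int (Y i x $ j) \<partial>M)"
          by (simp add: algebra_simps)
        also have "\<dots> = (\<integral>x. iB x * real_of_int (Y' i x $ j) \<partial>M) - (\<integral>x. iB x * real_of_int (Y i x $ j) \<partial>M)"
          by (rule Bochner_Integration.integral_diff)
             (rule bdd_int[OF iY'j[OF i] iBm iBb], rule bdd_int[OF iYj[OF i] iBm iBb])
        finally show ?thesis using Y'part[OF i] by simp
      qed
      then show ?thesis by (intro arg_cong2[where f="(/)"] sum.cong) auto
    qed
    also have "\<dots> = (\<integral>x. iB x * g x \<partial>M)"
    proof -
      have "(\<integral>x. iB x * g x \<partial>M) = (\<integral>x. (E * iB x - iB x * real_of_int (WW x $ j)) / real m \<partial>M)"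
        unfolding g_def by (intro Bochner_Integration.integral_cong) (auto simp: algebra_simps)
      also have "\<dots> = (E * (\<integral>x. iB x \<partial>M) - (\<integral>x. iB x * real_of_int (WW x $ j) \<partial>M)) / real m"
        using iiB bdd_int[OF iWj iBm iBb] by simp
      also have "(\<integral>x. iB x * real_of_int (WW x $ j) \<partial>M) = (\<Sum>i\<in>{1..m}. \<integral>x. iB x * real_of_int (Y i x $ j) \<partial>M)"
        unfolding Wj sum_distrib_left
        by (rule Bochner_Integration.integral_sum) (rule bdd_int[OF iYj iBm iBb])
      also have "E = (\<Sum>i\<in>{1..m}. \<integral>x. real_of_int (Y i x $ j) \<partial>M)"
        unfolding E_def Wj by (rule Bochner_Integration.integral_sum) (rule iYj)
      finally show ?thesis
        by (simp add: sum_subtractf sum_distrib_left sum_distrib_right mult.commute)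
    qed
    also have "\<dots> = (\<integral>x\<in>A. g x \<partial>M)" by (rule set_eq[symmetric])
    finally show "(\<integral>x\<in>A. f x \<partial>M) = (\<integral>x\<in>A. g x \<partial>M)" .
  qed
  then show ?thesis unfolding f_def g_def E_def .
qed

end

theorem mainTheorem10:
  fixes M :: "'a measure"
    and m :: nat
    and Y Y' :: "nat \<Rightarrow> 'a \<Rightarrow> int ^ 'd"
    and K :: "'a \<Rightarrow> nat"
    and W :: "'a \<Rightarrow> int ^ 'd"
    and Wi :: "nat \<Rightarrow> 'a \<Rightarrow> int ^ 'd"
  assumes P: "prob_space M"
    and m_pos: "m \<ge> 1"
    and Y_meas: "\<And>i. i \<in> {1..m} \<Longrightarrow> Y i \<in> measurable M (count_space UNIV)"
    and Y'_meas: "\<And>i. i \<in> {1..m} \<Longrightarrow> Y' i \<in> measurable M (count_space UNIV)"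
    and K_meas: "K \<in> measurable M (count_space UNIV)"
    and third_moments: "\<And>i. i \<in> {1..m} \<Longrightarrow> integrable M (\<lambda>x. norm (rvec (Y i x)) ^ 3)"
    and indep: "prob_space.indep_vars M (\<lambda>_. count_space UNIV)
          (\<lambda>t x. case t of Some (Inl i) \<Rightarrow> Inl (Y i x)
                         | Some (Inr i) \<Rightarrow> Inl (Y' i x)
                         | None \<Rightarrow> Inr (K x))
          (Some ` Inl ` {1..m} \<union> Some ` Inr ` {1..m} \<union> {None})"
    and copy: "\<And>i. i \<in> {1..m} \<Longrightarrow>
          distr M (count_space UNIV) (Y' i) = distr M (count_space UNIV) (Y i)"
    and K_range: "\<And>x. x \<in> space M \<Longrightarrow> K x \<in> {1..m}"
    and K_unif: "\<And>k. k \<in> {1..m} \<Longrightarrow> measure M {x \<in> space M. K x = k} = 1 / real m"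
    and W_def: "W \<equiv> (\<lambda>x. \<Sum>i\<in>{1..m}. Y i x)"
    and Wi_def: "Wi \<equiv> (\<lambda>i x. W x - Y i x)"
    and W'_def: "W' \<equiv> (\<lambda>x. W x - Y (K x) x + Y' (K x) x)"
    and xi_def: "\<xi> \<equiv> (\<lambda>x. rvec (W' x - W x))"
    and F_def: "F \<equiv> vimage_algebra (space M) W (count_space UNIV)"
    and sigma2_def: "\<sigma>2 \<equiv> (\<lambda>j k. integral\<^sup>L M (\<lambda>x. \<xi> x $ j * \<xi> x $ k))"
    and chi_def: "\<chi>3 \<equiv> integral\<^sup>L M (\<lambda>x. norm (\<xi> x) ^ 3)"
    and R2_def: "R2 \<equiv> (\<lambda>j k x. real_cond_exp M F (\<lambda>y. \<xi> y $ j * \<xi> y $ k) x - \<sigma>2 j k)"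
    and eps_def: "\<epsilon> \<equiv> Max ((\<lambda>(i, j). tv_dist (distr M (count_space UNIV) (Wi i))
                           (distr M (count_space UNIV) (\<lambda>x. Wi i x + unitv j)))
                        ` ({1..m} \<times> UNIV))"
  shows "(\<forall>j. AE x in M. real_cond_exp M F (\<lambda>y. \<xi> y $ j) x
              = - (rvec (W x) $ j - integral\<^sup>L M (\<lambda>y. rvec (W y) $ j)) / real m)
       \<and> integral\<^sup>L M (\<lambda>x. \<Sum>j\<in>UNIV. \<Sum>k\<in>UNIV. \<bar>R2 j k x\<bar>)
           \<le> 4 * \<epsilon> * integral\<^sup>L M (\<lambda>x. (\<Sum>j\<in>UNIV. \<bar>\<xi> x $ j\<bar>) ^ 3)
       \<and> 4 * \<epsilon> * integral\<^sup>L M (\<lambda>x. (\<Sum>j\<in>UNIV. \<bar>\<xi> x $ j\<bar>) ^ 3)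
           \<le> 4 * \<epsilon> * real CARD('d) powr (3/2) * \<chi>3"
proof -
  interpret P: prob_space M by (rule P)
  interpret S: setting M m Y Y' K
    by unfold_locales (use m_pos Y_meas Y'_meas K_meas third_moments indep copy K_range K_unif in auto)
  have WW: "W = S.WW" unfolding W_def S.WW_def ..
  have Wi: "Wi = S.VV" unfolding Wi_def S.VV_def WW by simp
  have eps: "\<epsilon> = S.eps" unfolding eps_def S.eps_def Wi ..
  have FF: "F = S.FF" unfolding F_def S.FF_def WW ..
  have dW: "\<And>y. W' y - W y = Y' (K y) y - Y (K y) y" unfolding W'_def by (simp add: algebra_simps)
  have xi: "\<And>y j. \<xi> y $ j = real_of_int ((Y' (K y) y - Y (K y) y) $ j)"
    unfolding xi_def by (simp add: dW rvec_def)
  have xixi: "\<And>j k. (\<lambda>y. \<xi> y $ j * \<xi> y $ k) = (\<lambda>y. gg j k (Y' (K y) y - Y (K y) y))"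
    by (simp add: xi gg_def)
  have l1xi: "\<And>x. (\<Sum>j\<in>UNIV. \<bar>\<xi> x $ j\<bar>) = l1 (Y' (K x) x - Y (K x) x)"
    by (simp add: xi l1_def)
  have c1: "\<forall>j. AE x in M. real_cond_exp M F (\<lambda>y. \<xi> y $ j) x
              = - (rvec (W x) $ j - integral\<^sup>L M (\<lambda>y. rvec (W y) $ j)) / real m"
  proof
    fix j
    have "(\<lambda>y. \<xi> y $ j) = (\<lambda>y. real_of_int ((Y' (K y) y - Y (K y) y) $ j))" by (simp add: xi)
    then show "AE x in M. real_cond_exp M F (\<lambda>y. \<xi> y $ j) x
              = - (rvec (W x) $ j - integral\<^sup>L M (\<lambda>y. rvec (W y) $ j)) / real m"
      using S.cond_first[of j] unfolding FF WW by (simp add: rvec_def)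
  qed
  have c2: "integral\<^sup>L M (\<lambda>x. \<Sum>j\<in>UNIV. \<Sum>k\<in>UNIV. \<bar>R2 j k x\<bar>)
           \<le> 4 * \<epsilon> * integral\<^sup>L M (\<lambda>x. (\<Sum>j\<in>UNIV. \<bar>\<xi> x $ j\<bar>) ^ 3)"
    unfolding R2_def sigma2_def xixi FF eps l1xi by (rule S.main_R2)
  have e0: "0 \<le> \<epsilon>" unfolding eps by (rule S.eps_nonneg)
  have i1: "integrable M (\<lambda>x. (\<Sum>j\<in>UNIV. \<bar>\<xi> x $ j\<bar>) ^ 3)"
    unfolding l1xi using S.K_step(1)[of "\<lambda>i w y y'. l1 (y' - y) ^ 3"] S.int_diff_b[OF _ S.l13_b] by simp
  have nb: "\<And>x. norm (\<xi> x) \<le> (\<Sum>j\<in>UNIV. \<bar>\<xi> x $ j\<bar>)" by (rule norm_le_l1_cart)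
  have xim: "\<xi> \<in> borel_measurable M"
  proof -
    have "(\<lambda>x. Y' (K x) x - Y (K x) x) \<in> measurable M (count_space UNIV)"
    proof (rule measurable_compose_countable'[where I="{1..m}" and g=K])
      show "\<And>i. i \<in> {1..m} \<Longrightarrow> (\<lambda>x. Y' i x - Y i x) \<in> measurable M (count_space UNIV)"
        by (rule S.diff_meas)
      show "K \<in> measurable M (count_space {1..m})"
        using K_meas K_range by (auto simp: measurable_count_space_eq2_countable)
    qed simp
    then have "(\<lambda>x. rvec (Y' (K x) x - Y (K x) x)) \<in> borel_measurable M"
      by (rule meas_count_real) simp
    moreover have "\<xi> = (\<lambda>x. rvec (Y' (K x) x - Y (K x) x))" unfolding xi_def by (simp add: dW)
    ultimately show ?thesis by simp
  qed
  have i2: "integrable M (\<lambda>x. norm (\<xi> x) ^ 3)"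
  proof (rule Bochner_Integration.integrable_bound[OF i1])
    show "(\<lambda>x. norm (\<xi> x) ^ 3) \<in> borel_measurable M" using xim by measurable
    show "AE x in M. norm (norm (\<xi> x) ^ 3) \<le> norm ((\<Sum>j\<in>UNIV. \<bar>\<xi> x $ j\<bar>) ^ 3)"
      by (rule AE_I2) (simp add: power_mono nb sum_nonneg)
  qed
  have "integral\<^sup>L M (\<lambda>x. (\<Sum>j\<in>UNIV. \<bar>\<xi> x $ j\<bar>) ^ 3) \<le> integral\<^sup>L M (\<lambda>x. real CARD('d) powr (3/2) * norm (\<xi> x) ^ 3)"
    by (rule integral_mono[OF i1]) (use i2 l1_cube_norm in auto)
  also have "\<dots> = real CARD('d) powr (3/2) * \<chi>3" unfolding chi_def by simp
  finally have c3: "4 * \<epsilon> * integral\<^sup>L M (\<lambda>x. (\<Sum>j\<in>UNIV. \<bar>\<xi> x $ j\<bar>) ^ 3)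
           \<le> 4 * \<epsilon> * real CARD('d) powr (3/2) * \<chi>3"
    using e0 by (simp add: mult_left_mono mult.assoc)
  show ?thesis using c1 c2 c3 by blast
qed

end
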